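(* Let $C$ be a spherical convex body in $S^n$ and let $0<\tau<\pi$. Then $C$ is of constant diameter $\tau$ if and only if its spherical polar $C^\circ$ is of constant diameter $\pi-\tau$.
   Context: $S^n$ is the unit sphere in $\mathbb{R}^{n+1}$, with origin $O$ and Euclidean inner product $\cdot$. The spherical distance of $P,Q\in S^n$ is $|PQ|=\arccos(\overrightarrow{OP}\cdot\overrightarrow{OQ})$. A set $K\subseteq S^n$ is spherically convex if the cone $\{\lambda u:\lambda>0,u\in K\}$ is convex in $\mathbb{R}^{n+1}$. A spherical convex body is a closed, spherically convex subset of $S^n$ with nonempty interior relative to $S^n$. The boundary of $K$ relative to $S^n$ is denoted $\partial K$. For $P\in S^n$, the closed hemisphere centered at $P$ is $S^+_P=\{Q\in S^n:\overrightarrow{OP}\cdot\overrightarrow{OQ}\ge 0\}$. The spherical polar set of $W\subseteq S^n$ is $W^\circ=\bigcap_{P\in W}S^+_P$. The diameter of $K$ is $\max\{|PQ|:P,Q\in K\}$. The body $K$ is of constant diameter $\tau$ if its diameter is $\tau$ and, for every $P\in\partial K$, there is $Q\in K$ with $|PQ|=\tau$. *)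

theory Defs
  imports "HOL-Analysis.Analysis"
begin

text \<open>The unit sphere S^n is modelled as sphere 0 1 in a Euclidean space of
dimension n+1 (an arbitrary euclidean_space type).\<close>

definition sdist :: "'a::euclidean_space \<Rightarrow> 'a \<Rightarrow> real" where
  "sdist P Q = arccos (P \<bullet> Q)"

definition spherically_convex :: "'a::euclidean_space set \<Rightarrow> bool" where
  "spherically_convex K \<longleftrightarrow> K \<subseteq> sphere 0 1 \<and>
     convex {c *\<^sub>R u | c u. c > 0 \<and> u \<in> K}"

definition spherical_convex_body :: "'a::euclidean_space set \<Rightarrow> bool" where
  "spherical_convex_body K \<longleftrightarrow> closed K \<and> spherically_convex K \<and>
     (\<exists>U. openin (top_of_set (sphere 0 1)) U \<and> U \<noteq> {} \<and> U \<subseteq> K)"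

definition sboundary :: "'a::euclidean_space set \<Rightarrow> 'a set" where
  "sboundary K = (top_of_set (sphere (0::'a) 1)) frontier_of K"

definition hemisphere :: "'a::euclidean_space \<Rightarrow> 'a set" where
  "hemisphere P = {Q \<in> sphere 0 1. P \<bullet> Q \<ge> 0}"

definition spolar :: "'a::euclidean_space set \<Rightarrow> 'a set" where
  "spolar W = sphere 0 1 \<inter> (\<Inter>P\<in>W. hemisphere P)"

definition sdiameter :: "'a::euclidean_space set \<Rightarrow> real" where
  "sdiameter K = Sup {sdist P Q | P Q. P \<in> K \<and> Q \<in> K}"

definition constant_diameter :: "'a::euclidean_space set \<Rightarrow> real \<Rightarrow> bool" where
  "constant_diameter K \<tau> \<longleftrightarrow> sdiameter K = \<tau> \<and>
     (\<forall>P\<in>sboundary K. \<exists>Q\<in>K. sdist P Q = \<tau>)"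

end

theory Submission
  imports Defs
begin

lemma sphere_iff: "x \<in> sphere (0::'a::euclidean_space) 1 \<longleftrightarrow> norm x = 1"
  by simp

lemma inner_bound1:
  fixes x y :: "'a::euclidean_space"
  assumes "norm x = 1" "norm y = 1"
  shows "-1 \<le> x \<bullet> y" "x \<bullet> y \<le> 1"
  using Cauchy_Schwarz_ineq2[of x y] assms by auto

lemma sgn_unit: "norm x = 1 \<Longrightarrow> sgn x = x"
  by (simp add: sgn_div_norm)

lemma sc_comb:
  fixes K :: "'a::euclidean_space set"
  assumes sc: "spherically_convex K" and P: "P \<in> K" and Z: "Z \<in> K"
    and l: "l \<ge> 0" and m: "m \<ge> 0" and nz: "l *\<^sub>R P + m *\<^sub>R Z \<noteq> 0"
  shows "sgn (l *\<^sub>R P + m *\<^sub>R Z) \<in> K"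
proof -
  have KS: "K \<subseteq> sphere 0 1" using sc by (simp add: spherically_convex_def)
  have nP: "norm P = 1" "norm Z = 1" using KS P Z by auto
  consider "m = 0" | "l = 0" | "l > 0 \<and> m > 0" using l m by linarith
  then show ?thesis
  proof cases
    case 1
    then have "l > 0" using nz l by (cases "l = 0") auto
    then show ?thesis using 1 P nP by (simp add: sgn_scaleR sgn_unit)
  next
    case 2
    then have "m > 0" using nz m by (cases "m = 0") auto
    then show ?thesis using 2 Z nP by (simp add: sgn_scaleR sgn_unit)
  next
    case 3
    define W where "W = {c *\<^sub>R u | c u. c > 0 \<and> u \<in> K}"
    have cW: "convex W" using sc by (simp add: spherically_convex_def W_def)
    have PW: "P \<in> W" unfolding W_def using P by (auto intro!: exI[of _ 1])
    have ZW: "Z \<in> W" unfolding W_def using Z by (auto intro!: exI[of _ 1])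
    have "(l/(l+m)) *\<^sub>R P + (m/(l+m)) *\<^sub>R Z \<in> W"
      using convexD[OF cW PW ZW, of "l/(l+m)" "m/(l+m)"] 3
      by (simp add: add_divide_distrib[symmetric])
    then obtain c u where cu: "c > 0" "u \<in> K" "(l/(l+m)) *\<^sub>R P + (m/(l+m)) *\<^sub>R Z = c *\<^sub>R u"
      unfolding W_def by auto
    have "l *\<^sub>R P + m *\<^sub>R Z = (l+m) *\<^sub>R ((l/(l+m)) *\<^sub>R P + (m/(l+m)) *\<^sub>R Z)"
      using 3 by (simp add: scaleR_add_right)
    also have "\<dots> = ((l+m)*c) *\<^sub>R u" using cu by simp
    finally have "sgn (l *\<^sub>R P + m *\<^sub>R Z) = sgn u"
      using 3 cu by (simp add: sgn_scaleR)
    also have "\<dots> = u" using KS cu by (auto simp: sgn_unit)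
    finally show ?thesis using cu by simp
  qed
qed


lemma sqrt_facts:
  fixes b :: real assumes "0 \<le> b" "b \<le> 1"
  shows "0 \<le> sqrt (1 - b\<^sup>2)" "sqrt (1 - b\<^sup>2) \<le> 1" "1 - sqrt (1 - b\<^sup>2) \<le> b\<^sup>2"
    "(sqrt (1 - b\<^sup>2))\<^sup>2 = 1 - b\<^sup>2"
proof -
  have "b\<^sup>2 \<le> 1" using assms by (simp add: power2_eq_square mult_le_one)
  then have h: "0 \<le> 1 - b\<^sup>2" "1 - b\<^sup>2 \<le> 1" by auto
  show "0 \<le> sqrt (1 - b\<^sup>2)" using h by simp
  show "sqrt (1 - b\<^sup>2) \<le> 1" using h by simp
  have "1 - b\<^sup>2 \<le> sqrt (1 - b\<^sup>2)" using h
    by (metis real_sqrt_le_iff real_sqrt_unique power2_eq_square mult_le_cancel_left1 real_sqrt_ge_zero order_trans linorder_not_le real_sqrt_le_1_iff mult_right_le_one_le) 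
  then show "1 - sqrt (1 - b\<^sup>2) \<le> b\<^sup>2" by simp
  show "(sqrt (1 - b\<^sup>2))\<^sup>2 = 1 - b\<^sup>2" using h by simp
qed

lemma rot_unit:
  fixes A u :: "'a::euclidean_space"
  assumes "norm A = 1" "norm u = 1" "A \<bullet> u = 0" "a\<^sup>2 + b\<^sup>2 = 1"
  shows "norm (a *\<^sub>R A + b *\<^sub>R u) = 1"
proof -
  have "(norm (a *\<^sub>R A + b *\<^sub>R u))\<^sup>2 = (a *\<^sub>R A + b *\<^sub>R u) \<bullet> (a *\<^sub>R A + b *\<^sub>R u)"
    by (simp add: dot_square_norm)
  also have "\<dots> = a\<^sup>2 * (A \<bullet> A) + b\<^sup>2 * (u \<bullet> u)"
    using assms(3) by (simp add: inner_add_left inner_add_right inner_commute[of u A] power2_eq_square)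
  also have "\<dots> = 1" using assms by (simp add: dot_square_norm)
  finally show ?thesis by (smt (verit) norm_ge_zero power2_eq_1_iff)
qed

lemma rot_close:
  fixes A u :: "'a::euclidean_space"
  assumes "norm A = 1" "norm u = 1" "0 \<le> b" "b \<le> 1"
  shows "norm (sqrt (1 - b\<^sup>2) *\<^sub>R A + b *\<^sub>R u - A) \<le> 2*b"
proof -
  have "norm (sqrt (1 - b\<^sup>2) *\<^sub>R A + b *\<^sub>R u - A) = norm ((sqrt (1 - b\<^sup>2) - 1) *\<^sub>R A + b *\<^sub>R u)"
    by (simp add: algebra_simps)
  also have "\<dots> \<le> norm ((sqrt (1 - b\<^sup>2) - 1) *\<^sub>R A) + norm (b *\<^sub>R u)" by (rule norm_triangle_ineq)
  also have "\<dots> = (1 - sqrt (1 - b\<^sup>2)) + b" using assms sqrt_facts[OF assms(3,4)] by simp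
  also have "\<dots> \<le> b\<^sup>2 + b" using sqrt_facts[OF assms(3,4)] by simp
  also have "\<dots> \<le> 2*b" using assms by (simp add: power2_eq_square mult_left_le)
  finally show ?thesis .
qed


lemma far_pair:
  fixes K :: "'a::euclidean_space set"
  assumes sc: "spherically_convex K" and P: "P \<in> K" and Q: "Q \<in> K"
    and D1: "\<forall>X\<in>K. \<forall>Y\<in>K. e \<le> X \<bullet> Y" and PQ: "P \<bullet> Q = e" and Z: "Z \<in> K"
  shows "0 \<le> Z \<bullet> (Q - e *\<^sub>R P)"
proof (rule ccontr)
  have KS: "K \<subseteq> sphere 0 1" using sc by (simp add: spherically_convex_def)
  have nP: "norm P = 1" and nQ: "norm Q = 1" and nZ: "norm Z = 1" using KS P Q Z by auto
  have PP: "P \<bullet> P = 1" and ZZ: "Z \<bullet> Z = 1" using nP nZ by (simp_all add: dot_square_norm)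
  assume "\<not> 0 \<le> Z \<bullet> (Q - e *\<^sub>R P)"
  define \<beta> where "\<beta> = Z \<bullet> P"
  define d where "d = Z \<bullet> Q - e * \<beta>"
  have dneg: "d < 0" using \<open>\<not> _\<close> by (simp add: d_def \<beta>_def inner_diff_right)
  have eb: "-1 \<le> e" "e \<le> 1" using inner_bound1[OF nP nQ] PQ by auto
  have bb: "-1 \<le> \<beta>" "\<beta> \<le> 1" using inner_bound1[OF nZ nP] by (auto simp: \<beta>_def)
  define v where "v = Z - \<beta> *\<^sub>R P"
  have vP: "P \<bullet> v = 0" by (simp add: v_def inner_diff_right PP \<beta>_def inner_commute)
  have vv: "v \<bullet> v = 1 - \<beta>\<^sup>2"
    by (simp add: v_def inner_diff_left inner_diff_right PP ZZ \<beta>_def inner_commute power2_eq_square)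
  have v0: "v \<noteq> 0"
  proof
    assume "v = 0"
    then have "Z = \<beta> *\<^sub>R P" by (simp add: v_def)
    then have "d = 0" by (simp add: d_def PQ)
    with dneg show False by simp
  qed
  define \<rho> where "\<rho> = norm v"
  have rpos: "\<rho> > 0" using v0 by (simp add: \<rho>_def)
  have r2: "\<rho>\<^sup>2 = 1 - \<beta>\<^sup>2" using vv by (simp add: \<rho>_def dot_square_norm)
  have rle: "\<rho> \<le> 1"
  proof -
    have "\<rho>\<^sup>2 \<le> 1\<^sup>2" using r2 by simp
    then show ?thesis by (metis power2_le_imp_le zero_le_one)
  qed
  define u where "u = v /\<^sub>R \<rho>"
  have nu: "norm u = 1" using rpos by (simp add: u_def \<rho>_def)
  have uP: "P \<bullet> u = 0" using vP by (simp add: u_def)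
  define b where "b = min (1/2) (min (-d/2) (\<rho>/2))"
  have bpos: "b > 0" using dneg rpos by (simp add: b_def)
  have ble: "b \<le> 1/2" "b \<le> -d/2" "b \<le> \<rho>/2" by (simp_all add: b_def)
  define a where "a = sqrt (1 - b\<^sup>2)"
  note sf = sqrt_facts[of b, folded a_def]
  have sfa: "0 \<le> a" "a \<le> 1" "1 - a \<le> b\<^sup>2" "a\<^sup>2 = 1 - b\<^sup>2" using sf bpos ble by auto
  have ahalf: "a \<ge> 1/2"
  proof -
    have "b * b \<le> (1/2) * (1/2)" by (rule mult_mono) (use ble bpos in auto)
    then have "(1/2)\<^sup>2 \<le> a\<^sup>2" using sfa by (simp add: power2_eq_square)
    then show ?thesis using sfa by (metis power2_le_imp_le)
  qed
  define W where "W = a *\<^sub>R P + b *\<^sub>R u"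
  have nW: "norm W = 1" unfolding W_def by (rule rot_unit[OF nP nu uP]) (use sfa in simp)
  have W2: "W = (a - b * \<beta> / \<rho>) *\<^sub>R P + (b / \<rho>) *\<^sub>R Z"
    using rpos by (simp add: W_def u_def v_def algebra_simps scaleR_diff_right divide_inverse)
  have c1: "0 \<le> a - b * \<beta> / \<rho>"
  proof -
    have "b * \<beta> / \<rho> \<le> b / \<rho>" using bb bpos rpos by (simp add: divide_right_mono)
    also have "\<dots> \<le> 1/2" using ble rpos by (simp add: divide_le_eq)
    finally have "b * \<beta> / \<rho> \<le> 1/2" .
    then show ?thesis using ahalf by linarith
  qed
  have c2: "0 \<le> b / \<rho>" using bpos rpos by simp
  have WK: "W \<in> K"
  proof -
    have "W \<noteq> 0" using nW by auto
    then have "sgn W \<in> K" using sc_comb[OF sc P Z c1 c2] W2 by simp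
    then show ?thesis using nW by (simp add: sgn_unit)
  qed
  have WQ: "W \<bullet> Q = a * e + (b / \<rho>) * d"
    using rpos by (simp add: W2 inner_add_left PQ d_def \<beta>_def algebra_simps diff_divide_distrib add_divide_distrib)
  have "W \<bullet> Q < e"
  proof (cases "e \<ge> 0")
    case True
    have "a * e \<le> e" using True sfa by (simp add: mult_left_le_one_le)
    moreover have "(b / \<rho>) * d < 0"
    proof -
      have "b * d < 0" using bpos dneg by (simp add: mult_pos_neg)
      then show ?thesis using rpos by (simp add: divide_neg_pos)
    qed
    ultimately show ?thesis using WQ by simp
  next
    case False
    have "a * e - e = (1 - a) * (- e)" by (simp add: algebra_simps)
    also have "\<dots> \<le> (1 - a) * 1" using sfa eb by (intro mult_left_mono) auto
    also have "\<dots> \<le> b\<^sup>2" using sfa by simp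
    finally have h1: "a * e - e \<le> b\<^sup>2" .
    have "(b / \<rho>) * d \<le> b * d"
    proof -
      have "b \<le> b / \<rho>" using bpos rpos rle by (simp add: le_divide_eq)
      then have "(b / \<rho>) * d \<le> b * d" using dneg by (intro mult_right_mono_neg) auto
      then show ?thesis by simp
    qed
    moreover have "b\<^sup>2 + b * d < 0"
    proof -
      have "b\<^sup>2 + b * d = b * (b + d)" by (simp add: power2_eq_square algebra_simps)
      moreover have "b + d < 0" using ble dneg by simp
      ultimately show ?thesis using bpos by (simp add: mult_pos_neg)
    qed
    ultimately show ?thesis using WQ h1 by simp
  qed
  moreover have "e \<le> W \<bullet> Q" using D1 WK Q by blast
  ultimately show False by simp
qed


lemma spolar_iff: "X \<in> spolar W \<longleftrightarrow> norm X = 1 \<and> (\<forall>P\<in>W. 0 \<le> P \<bullet> X)"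
  by (auto simp: spolar_def hemisphere_def)

lemma closed_spolar: "closed (spolar (W::'a::euclidean_space set))"
proof -
  have "spolar W = sphere 0 1 \<inter> (\<Inter>P\<in>W. {X. 0 \<le> P \<bullet> X})"
    by (auto simp: spolar_iff)
  then show ?thesis by (auto intro!: closed_Int closed_INT closed_halfspace_ge)
qed

lemma sep_lemma:
  fixes A :: "'a::euclidean_space set"
  assumes AS: "A \<subseteq> sphere 0 1" and cA: "compact A"
    and cone: "convex hull A \<subseteq> {t *\<^sub>R u | t u. t > 0 \<and> u \<in> A}"
    and Z: "norm Z = 1" and ZA: "Z \<notin> A"
  shows "\<exists>h \<beta>. norm h = 1 \<and> \<beta> > 0 \<and> h \<bullet> Z \<le> -\<beta> \<and> (\<forall>y\<in>A. \<beta> \<le> h \<bullet> y)"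
proof (cases "A = {}")
  case True
  then show ?thesis using Z by (intro exI[of _ "-Z"] exI[of _ 1]) (auto simp: dot_square_norm)
next
  case False
  define M where "M = convex hull (insert (-Z) A)"
  have cM: "compact M" using cA by (simp add: M_def compact_convex_hull)
  have M0: "0 \<notin> M"
  proof
    assume "0 \<in> M"
    then obtain u v b where uv: "u \<ge> 0" "v \<ge> 0" "u + v = 1" "b \<in> convex hull A"
      "0 = u *\<^sub>R (-Z) + v *\<^sub>R b"
      unfolding M_def convex_hull_insert[OF False] by auto
    then obtain t w where tw: "t > 0" "w \<in> A" "b = t *\<^sub>R w" using cone by blast
    have nw: "norm w = 1" using AS tw by auto
    have eq: "u *\<^sub>R Z = (v * t) *\<^sub>R w" using uv tw by (simp add: algebra_simps)
    show False
    proof (cases "u = 0")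
      case True
      then have "v = 1" using uv by simp
      then have "t *\<^sub>R w = 0" using eq True by simp
      then show False using tw nw by auto
    next
      case False
      have "norm (u *\<^sub>R Z) = norm ((v * t) *\<^sub>R w)" using eq by simp
      then have "u = v * t" using uv tw Z nw by simp
      then have "Z = w" using eq False by simp
      then show False using ZA tw by simp
    qed
  qed
  obtain a b where ab: "a \<noteq> 0" "0 < b" "\<forall>x\<in>M. b < a \<bullet> x"
    using separating_hyperplane_closed_0[of M] cM M0 convex_convex_hull[of "insert (-Z) A"]
    by (auto simp: M_def compact_imp_closed)
  have "-Z \<in> M" unfolding M_def by (rule hull_inc) simp
  then have "b < a \<bullet> (-Z)" using ab by blast
  then have aZ: "a \<bullet> Z < -b" by simp
  have aA: "\<forall>y\<in>A. b < a \<bullet> y" using ab unfolding M_def by (meson hull_inc insertCI)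
  define h where "h = a /\<^sub>R norm a"
  have na: "norm a > 0" using ab by simp
  show ?thesis
  proof (intro exI[of _ h] exI[of _ "b / norm a"] conjI ballI)
    show "norm h = 1" using na by (simp add: h_def)
    show "b / norm a > 0" using ab na by simp
    show "h \<bullet> Z \<le> - (b / norm a)"
    proof -
      have "(a \<bullet> Z) / norm a \<le> (-b) / norm a" using aZ na by (intro divide_right_mono) auto
      then show ?thesis by (simp add: h_def divide_inverse mult.commute)
    qed
    fix y assume "y \<in> A"
    then have "b / norm a \<le> (a \<bullet> y) / norm a" using aA na by (intro divide_right_mono) auto
    then show "b / norm a \<le> h \<bullet> y" by (simp add: h_def divide_inverse mult.commute)
  qed
qed


locale sbody =
  fixes C :: "'a::euclidean_space set"
  assumes body: "spherical_convex_body C"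
begin

lemma sc: "spherically_convex C" using body by (simp add: spherical_convex_body_def)
lemma CS: "C \<subseteq> sphere 0 1" using sc by (simp add: spherically_convex_def)
lemma clC: "closed C" using body by (simp add: spherical_convex_body_def)
lemma cpC: "compact C"
  using clC CS compact_sphere[of "0::'a" 1] by (meson bounded_subset compact_eq_bounded_closed)
lemma nC: "Q \<in> C \<Longrightarrow> norm Q = 1" using CS by auto

lemma int_pt: "\<exists>x T. open T \<and> x \<in> T \<and> x \<in> C \<and> T \<inter> sphere 0 1 \<subseteq> C"
proof -
  obtain U where U: "openin (top_of_set (sphere 0 1)) U" "U \<noteq> {}" "U \<subseteq> C"
    using body by (auto simp: spherical_convex_body_def)
  then obtain T where "open T" "U = sphere 0 1 \<inter> T" by (auto simp: openin_open)
  then obtain x where "x \<in> U" using U by blast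
  then show ?thesis using U \<open>open T\<close> \<open>U = _\<close> by blast
qed

definition "ctr = (SOME x. \<exists>T. open T \<and> x \<in> T \<and> x \<in> C \<and> T \<inter> sphere 0 1 \<subseteq> C)"
definition "T0 = (SOME T. open T \<and> ctr \<in> T \<and> T \<inter> sphere 0 1 \<subseteq> C)"

lemma o_T0: "open T0" "ctr \<in> T0" "T0 \<inter> sphere 0 1 \<subseteq> C" "ctr \<in> C"
proof -
  have ex1: "\<exists>T. open T \<and> ctr \<in> T \<and> ctr \<in> C \<and> T \<inter> sphere 0 1 \<subseteq> C"
    unfolding ctr_def using someI_ex[OF int_pt] .
  then have "\<exists>T. open T \<and> ctr \<in> T \<and> T \<inter> sphere 0 1 \<subseteq> C" by blast
  then have "open T0 \<and> ctr \<in> T0 \<and> T0 \<inter> sphere 0 1 \<subseteq> C"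
    unfolding T0_def by (rule someI_ex)
  then show "open T0" "ctr \<in> T0" "T0 \<inter> sphere 0 1 \<subseteq> C" by auto
  show "ctr \<in> C" using ex1 by blast
qed

lemma oC: "ctr \<in> C" and no: "norm ctr = 1"
  using o_T0 nC by auto

lemma rot_in_C: "\<exists>b0>0. \<forall>b u. 0 < b \<and> b \<le> b0 \<and> norm u = 1 \<and> ctr \<bullet> u = 0 \<longrightarrow>
    sqrt (1 - b\<^sup>2) *\<^sub>R ctr + b *\<^sub>R u \<in> C"
proof -
  obtain r where r: "r > 0" "ball ctr r \<subseteq> T0" using o_T0 open_contains_ball by blast
  show ?thesis
  proof (intro exI[of _ "min 1 (r/3)"] conjI allI impI)
    show "0 < min 1 (r/3)" using r by simp
    fix b u assume h: "0 < b \<and> b \<le> min 1 (r / 3) \<and> norm u = 1 \<and> ctr \<bullet> u = 0"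
    define a where "a = sqrt (1 - b\<^sup>2)"
    have b01: "0 \<le> b" "b \<le> 1" using h by auto
    have "a\<^sup>2 + b\<^sup>2 = 1" using sqrt_facts[OF b01] by (simp add: a_def)
    then have n1: "norm (a *\<^sub>R ctr + b *\<^sub>R u) = 1" using rot_unit[OF no] h by blast
    have "norm (a *\<^sub>R ctr + b *\<^sub>R u - ctr) \<le> 2 * b" unfolding a_def
      using rot_close[OF no _ b01] h by blast
    also have "\<dots> < r" using h r by linarith
    finally have "a *\<^sub>R ctr + b *\<^sub>R u \<in> ball ctr r" by (simp add: dist_norm norm_minus_commute)
    then have "a *\<^sub>R ctr + b *\<^sub>R u \<in> T0 \<inter> sphere 0 1" using r n1 by auto
    then show "sqrt (1 - b\<^sup>2) *\<^sub>R ctr + b *\<^sub>R u \<in> C" using o_T0 by (auto simp: a_def)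
  qed
qed

lemma polar_pos: assumes "Y \<in> spolar C" shows "0 < ctr \<bullet> Y"
proof -
  have Y: "norm Y = 1" "\<forall>P\<in>C. 0 \<le> P \<bullet> Y" using assms by (auto simp: spolar_iff)
  have ge: "0 \<le> ctr \<bullet> Y" using Y oC by blast
  show ?thesis
  proof (rule ccontr)
    assume "\<not> 0 < ctr \<bullet> Y"
    then have oY: "ctr \<bullet> Y = 0" using ge by simp
    obtain b0 where b0: "b0 > 0" "\<forall>b u. 0 < b \<and> b \<le> b0 \<and> norm u = 1 \<and> ctr \<bullet> u = 0 \<longrightarrow>
      sqrt (1 - b\<^sup>2) *\<^sub>R ctr + b *\<^sub>R u \<in> C" using rot_in_C by blast
    have "sqrt (1 - b0\<^sup>2) *\<^sub>R ctr + b0 *\<^sub>R (-Y) \<in> C"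
      using b0(2)[rule_format, of b0 "-Y"] b0(1) Y oY by simp
    then have "0 \<le> (sqrt (1 - b0\<^sup>2) *\<^sub>R ctr + b0 *\<^sub>R (-Y)) \<bullet> Y" using Y by blast
    moreover have "(sqrt (1 - b0\<^sup>2) *\<^sub>R ctr + b0 *\<^sub>R (-Y)) \<bullet> Y = - b0"
      using oY Y by (simp add: inner_add_left inner_diff_left dot_square_norm)
    ultimately show False using b0 by simp
  qed
qed

lemma cone_hull_C: "convex hull C \<subseteq> {t *\<^sub>R u | t u. t > 0 \<and> u \<in> C}"
proof (rule hull_minimal)
  show "C \<subseteq> {t *\<^sub>R u | t u. t > 0 \<and> u \<in> C}" by (auto intro!: exI[of _ 1])
  show "convex {t *\<^sub>R u | t u. t > 0 \<and> u \<in> C}" using sc by (simp add: spherically_convex_def)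
qed

lemma strict_polar: "\<exists>h \<beta>. norm h = 1 \<and> \<beta> > 0 \<and> (\<forall>Q\<in>C. \<beta> \<le> h \<bullet> Q)"
proof -
  have "0 \<notin> convex hull C"
  proof
    assume "0 \<in> convex hull C"
    then obtain t u where "t > 0" "u \<in> C" "0 = t *\<^sub>R u" using cone_hull_C by blast
    then show False using nC by force
  qed
  then obtain a b where ab: "a \<noteq> 0" "0 < b" "\<forall>x\<in>convex hull C. b < a \<bullet> x"
    using separating_hyperplane_closed_0[of "convex hull C"] cpC
    by (auto simp: compact_convex_hull compact_imp_closed)
  have na: "norm a > 0" using ab by simp
  show ?thesis
  proof (intro exI[of _ "a /\<^sub>R norm a"] exI[of _ "b / norm a"] conjI ballI)
    show "norm (a /\<^sub>R norm a) = 1" using na by simp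
    show "b / norm a > 0" using ab na by simp
    fix Q assume "Q \<in> C"
    then have "b < a \<bullet> Q" using ab hull_inc[of Q C] by blast
    then have "b / norm a \<le> (a \<bullet> Q) / norm a" using na by (intro divide_right_mono) auto
    then show "b / norm a \<le> (a /\<^sub>R norm a) \<bullet> Q" by (simp add: divide_inverse mult.commute)
  qed
qed

lemma bipolar: "spolar (spolar C) = C"
proof
  show "C \<subseteq> spolar (spolar C)"
  proof
    fix x assume "x \<in> C"
    have "\<forall>P\<in>spolar C. 0 \<le> P \<bullet> x"
    proof
      fix P assume "P \<in> spolar C"
      then have "0 \<le> x \<bullet> P" using \<open>x \<in> C\<close> by (auto simp: spolar_iff)
      then show "0 \<le> P \<bullet> x" by (simp add: inner_commute)
    qed
    then show "x \<in> spolar (spolar C)" using nC \<open>x \<in> C\<close> unfolding spolar_iff by auto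
  qed
  show "spolar (spolar C) \<subseteq> C"
  proof
    fix Z assume Z: "Z \<in> spolar (spolar C)"
    then have nZ: "norm Z = 1" and ZX: "\<forall>X\<in>spolar C. 0 \<le> X \<bullet> Z" by (auto simp: spolar_iff)
    show "Z \<in> C"
    proof (rule ccontr)
      assume "Z \<notin> C"
      then obtain h \<beta> where h: "norm h = 1" "\<beta> > 0" "h \<bullet> Z \<le> -\<beta>" "\<forall>y\<in>C. \<beta> \<le> h \<bullet> y"
        using sep_lemma[OF CS cpC cone_hull_C nZ] by blast
      have "h \<in> spolar C" using h by (auto simp: spolar_iff inner_commute intro: order_trans[of 0 \<beta>])
      then have "0 \<le> h \<bullet> Z" using ZX by blast
      then show False using h by simp
    qed
  qed
qed

end

context sbody begin

lemma polar_sc: "spherically_convex (spolar C)"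
  unfolding spherically_convex_def
proof (intro conjI)
  show "spolar C \<subseteq> sphere 0 1" by (auto simp: spolar_iff)
  show "convex {c *\<^sub>R u | c u. c > 0 \<and> u \<in> spolar C}"
    unfolding convex_def
  proof (intro ballI allI impI)
    fix x y and u v :: real
    assume x: "x \<in> {c *\<^sub>R u | c u. c > 0 \<and> u \<in> spolar C}" and y: "y \<in> {c *\<^sub>R u | c u. c > 0 \<and> u \<in> spolar C}"
      and uv: "0 \<le> u" "0 \<le> v" "u + v = 1"
    obtain c1 X1 where 1: "x = c1 *\<^sub>R X1" "c1 > 0" "X1 \<in> spolar C" using x by blast
    obtain c2 X2 where 2: "y = c2 *\<^sub>R X2" "c2 > 0" "X2 \<in> spolar C" using y by blast
    define z where "z = u *\<^sub>R x + v *\<^sub>R y"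
    have p1: "0 < ctr \<bullet> X1" "0 < ctr \<bullet> X2" using polar_pos 1 2 by auto
    have zc: "ctr \<bullet> z = (u * c1) * (ctr \<bullet> X1) + (v * c2) * (ctr \<bullet> X2)"
      by (simp add: z_def 1 2 inner_add_right)
    have "0 < ctr \<bullet> z"
    proof (cases "u = 0")
      case True
      then have "v = 1" using uv by simp
      then show ?thesis using zc True 2 p1 by simp
    next
      case False
      then have "u > 0" using uv by simp
      then have "0 < (u * c1) * (ctr \<bullet> X1)" using 1 p1 by simp
      moreover have "0 \<le> (v * c2) * (ctr \<bullet> X2)" using uv 2 p1 by simp
      ultimately show ?thesis using zc by linarith
    qed
    then have z0: "z \<noteq> 0" by auto
    have "sgn z \<in> spolar C"
      unfolding spolar_iff
    proof (intro conjI ballI)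
      show "norm (sgn z) = 1" using z0 by (simp add: norm_sgn)
      fix P assume "P \<in> C"
      then have "0 \<le> P \<bullet> X1" "0 \<le> P \<bullet> X2" using 1 2 by (auto simp: spolar_iff)
      then have "0 \<le> P \<bullet> z" using uv 1 2 by (simp add: z_def inner_add_right)
      then show "0 \<le> P \<bullet> sgn z" by (simp add: sgn_div_norm)
    qed
    moreover have "z = norm z *\<^sub>R sgn z" using z0 by (simp add: sgn_div_norm)
    moreover have "norm z > 0" using z0 by simp
    ultimately show "u *\<^sub>R x + v *\<^sub>R y \<in> {c *\<^sub>R u | c u. c > 0 \<and> u \<in> spolar C}"
      unfolding z_def by blast
  qed
qed

lemma polar_body: "spherical_convex_body (spolar C)"
  unfolding spherical_convex_body_def
proof (intro conjI)
  show "closed (spolar C)" by (rule closed_spolar)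
  show "spherically_convex (spolar C)" by (rule polar_sc)
  obtain h \<beta> where h: "norm h = 1" "\<beta> > 0" "\<forall>Q\<in>C. \<beta> \<le> h \<bullet> Q" using strict_polar by blast
  show "\<exists>U. openin (top_of_set (sphere 0 1)) U \<and> U \<noteq> {} \<and> U \<subseteq> spolar C"
  proof (intro exI[of _ "sphere 0 1 \<inter> ball h \<beta>"] conjI)
    show "openin (top_of_set (sphere 0 1)) (sphere 0 1 \<inter> ball h \<beta>)"
      by (auto simp: openin_open)
    show "sphere 0 1 \<inter> ball h \<beta> \<noteq> {}" using h by auto
    show "sphere 0 1 \<inter> ball h \<beta> \<subseteq> spolar C"
    proof
      fix X assume X: "X \<in> sphere 0 1 \<inter> ball h \<beta>"
      show "X \<in> spolar C"
        unfolding spolar_iff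
      proof (intro conjI ballI)
        show "norm X = 1" using X by simp
        fix P assume P: "P \<in> C"
        have "\<bar>P \<bullet> (X - h)\<bar> \<le> norm P * norm (X - h)" by (rule Cauchy_Schwarz_ineq2)
        also have "\<dots> < \<beta>" using X P nC by (simp add: dist_norm norm_minus_commute)
        finally have "\<bar>P \<bullet> (X - h)\<bar> < \<beta>" .
        moreover have "P \<bullet> X = P \<bullet> h + P \<bullet> (X - h)" by (simp add: inner_diff_right)
        moreover have "\<beta> \<le> P \<bullet> h" using h P by (simp add: inner_commute)
        ultimately show "0 \<le> P \<bullet> X" by linarith
      qed
    qed
  qed
qed

lemma polar_frontier:
  assumes "X \<in> sboundary (spolar C)"
  shows "X \<in> spolar C" "\<exists>P\<in>C. P \<bullet> X = 0"
proof -
  have cl: "closedin (top_of_set (sphere 0 1)) (spolar C)"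
  proof -
    have "spolar C = sphere 0 1 \<inter> spolar C" by (auto simp: spolar_iff)
    then show ?thesis using closedin_closed_Int[OF closed_spolar, of "sphere 0 1" C] by simp
  qed
  have X: "X \<in> spolar C" "X \<notin> (top_of_set (sphere 0 1)) interior_of (spolar C)"
    using assms closure_of_closedin[OF cl] by (auto simp: sboundary_def frontier_of_def)
  then show "X \<in> spolar C" by simp
  show "\<exists>P\<in>C. P \<bullet> X = 0"
  proof (rule ccontr)
    assume "\<not> (\<exists>P\<in>C. P \<bullet> X = 0)"
    then have pos: "\<forall>P\<in>C. 0 < P \<bullet> X" using X by (force simp: spolar_iff)
    have "continuous_on C (\<lambda>P. P \<bullet> X)" by (intro continuous_intros)
    then obtain P0 where P0: "P0 \<in> C" "\<forall>P\<in>C. P0 \<bullet> X \<le> P \<bullet> X"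
      using continuous_attains_inf[OF cpC, of "\<lambda>P. P \<bullet> X"] oC by blast
    define \<mu> where "\<mu> = P0 \<bullet> X"
    have mu: "\<mu> > 0" using pos P0 by (simp add: \<mu>_def)
    have "X \<in> (top_of_set (sphere 0 1)) interior_of (spolar C)"
      unfolding interior_of_def
    proof (intro CollectI exI[of _ "sphere 0 1 \<inter> ball X \<mu>"] conjI)
      show "openin (top_of_set (sphere 0 1)) (sphere 0 1 \<inter> ball X \<mu>)" by (auto simp: openin_open)
      show "X \<in> sphere 0 1 \<inter> ball X \<mu>" using X mu by (simp add: spolar_iff)
      show "sphere 0 1 \<inter> ball X \<mu> \<subseteq> spolar C"
      proof
        fix Y assume Y: "Y \<in> sphere 0 1 \<inter> ball X \<mu>"
        show "Y \<in> spolar C"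
          unfolding spolar_iff
        proof (intro conjI ballI)
          show "norm Y = 1" using Y by simp
          fix P assume P: "P \<in> C"
          have "\<bar>P \<bullet> (Y - X)\<bar> \<le> norm P * norm (Y - X)" by (rule Cauchy_Schwarz_ineq2)
          also have "\<dots> < \<mu>" using Y P nC by (simp add: dist_norm norm_minus_commute)
          finally have "\<bar>P \<bullet> (Y - X)\<bar> < \<mu>" .
          moreover have "P \<bullet> Y = P \<bullet> X + P \<bullet> (Y - X)" by (simp add: inner_diff_right)
          moreover have "\<mu> \<le> P \<bullet> X" using P0 P by (simp add: \<mu>_def)
          ultimately show "0 \<le> P \<bullet> Y" by linarith
        qed
      qed
    qed
    then show False using X by simp
  qed
qed

lemma frontier_intro:
  assumes "P \<in> C" "P \<notin> (top_of_set (sphere 0 1)) interior_of C"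
  shows "P \<in> sboundary C"
proof -
  have "C \<subseteq> (top_of_set (sphere 0 1)) closure_of C" using CS by (intro closure_of_subset) simp
  then show ?thesis using assms by (auto simp: sboundary_def frontier_of_def)
qed

lemma interior_open: "\<exists>T. open T \<and> (top_of_set (sphere 0 1)) interior_of C = sphere 0 1 \<inter> T"
  by (meson openin_interior_of openin_open)

lemma ctr_interior: "ctr \<in> (top_of_set (sphere 0 1)) interior_of C"
  unfolding interior_of_def
  using o_T0 no by (intro CollectI exI[of _ "sphere 0 1 \<inter> T0"]) (auto simp: openin_open)

end

lemma sgn_close:
  fixes X y :: "'a::euclidean_space"
  assumes "norm X = 1" "y \<noteq> 0"
  shows "norm (sgn y - X) \<le> 2 * norm (y - X)"
proof -
  have "sgn y - y = (1 / norm y - 1) *\<^sub>R y" by (simp add: sgn_div_norm scaleR_diff_left divide_inverse)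
  then have "norm (sgn y - y) = \<bar>1 / norm y - 1\<bar> * norm y" by simp
  also have "\<dots> = \<bar>(1 / norm y - 1) * norm y\<bar>" by (simp add: abs_mult)
  also have "\<dots> = \<bar>1 - norm y\<bar>" using assms by (simp add: divide_simps)
  also have "\<dots> = \<bar>norm X - norm y\<bar>" using assms by simp
  also have "\<dots> \<le> norm (X - y)" by (rule norm_triangle_ineq3)
  finally have 1: "norm (sgn y - y) \<le> norm (y - X)" by (simp add: norm_minus_commute)
  have "norm (sgn y - X) \<le> norm (sgn y - y) + norm (y - X)"
    using norm_triangle_ineq[of "sgn y - y" "y - X"] by simp
  then show ?thesis using 1 by simp
qed

lemma perp_unit:
  fixes A B :: "'a::euclidean_space"
  assumes A: "norm A = 1" and B: "norm B = 1" and AB: "A \<bullet> B = c" and cs: "c\<^sup>2 + s\<^sup>2 = 1" and s: "s > 0"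
  shows "norm ((B - c *\<^sub>R A) /\<^sub>R s) = 1" "A \<bullet> ((B - c *\<^sub>R A) /\<^sub>R s) = 0"
    "B \<bullet> ((B - c *\<^sub>R A) /\<^sub>R s) = s" "B = c *\<^sub>R A + s *\<^sub>R ((B - c *\<^sub>R A) /\<^sub>R s)"
proof -
  have AA: "A \<bullet> A = 1" and BB: "B \<bullet> B = 1" using A B by (simp_all add: dot_square_norm)
  have "(B - c *\<^sub>R A) \<bullet> (B - c *\<^sub>R A) = s\<^sup>2"
    using AA BB AB cs by (simp add: inner_diff_left inner_diff_right inner_commute[of B A] power2_eq_square algebra_simps)
  then have "norm (B - c *\<^sub>R A) = sqrt (s\<^sup>2)" by (simp add: norm_eq_sqrt_inner)
  then have "norm (B - c *\<^sub>R A) = s" using s by simp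
  then show "norm ((B - c *\<^sub>R A) /\<^sub>R s) = 1" using s by simp
  show "A \<bullet> ((B - c *\<^sub>R A) /\<^sub>R s) = 0" using AA AB by (simp add: inner_diff_right)
  have "B \<bullet> (B - c *\<^sub>R A) = s\<^sup>2" using BB AB cs by (simp add: inner_diff_right inner_commute[of B A] power2_eq_square algebra_simps)
  then show "B \<bullet> ((B - c *\<^sub>R A) /\<^sub>R s) = s" using s by (simp add: power2_eq_square)
  show "B = c *\<^sub>R A + s *\<^sub>R ((B - c *\<^sub>R A) /\<^sub>R s)" using s by simp
qed

lemma norm_comb_le1:
  fixes A B :: "'a::euclidean_space"
  assumes "norm A = 1" "norm B = 1" "0 \<le> t" "t \<le> 1"
  shows "norm ((1 - t) *\<^sub>R A + t *\<^sub>R B) \<le> 1"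
proof -
  have "norm ((1 - t) *\<^sub>R A + t *\<^sub>R B) \<le> norm ((1 - t) *\<^sub>R A) + norm (t *\<^sub>R B)" by (rule norm_triangle_ineq)
  also have "\<dots> = 1" using assms by simp
  finally show ?thesis .
qed

lemma norm_comb_ge:
  fixes A B :: "'a::euclidean_space"
  assumes "norm A = 1" "norm B = 1" "0 \<le> A \<bullet> B" "0 \<le> t" "t \<le> 1"
  shows "1 - t \<le> norm ((1 - t) *\<^sub>R A + t *\<^sub>R B)" "(1 - t) *\<^sub>R A + t *\<^sub>R B \<noteq> 0"
proof -
  define y where "y = (1 - t) *\<^sub>R A + t *\<^sub>R B"
  have AA: "A \<bullet> A = 1" and BB: "B \<bullet> B = 1" using assms by (simp_all add: dot_square_norm)
  have "y \<bullet> y = (1-t) * (1-t) * (A \<bullet> A) + (1-t) * t * (A \<bullet> B) + t * (1-t) * (B \<bullet> A) + t * t * (B \<bullet> B)"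
    unfolding y_def by (simp add: inner_add_left inner_add_right) (simp add: algebra_simps)
  also have "\<dots> = (1-t) * (1-t) + t * t + 2 * ((1-t) * t) * (A \<bullet> B)"
    by (simp add: AA BB inner_commute[of B A])
  finally have e: "y \<bullet> y = (1-t) * (1-t) + t * t + 2 * ((1-t) * t) * (A \<bullet> B)" .
  have nn: "0 \<le> 2 * ((1-t) * t) * (A \<bullet> B)" using assms by simp
  moreover have "0 \<le> t * t" by simp
  ultimately have h: "(1-t) * (1-t) \<le> y \<bullet> y" using e by linarith
  have "(1-t) * (1-t) \<le> norm y * norm y" using h by (simp add: dot_square_norm power2_eq_square)
  then show "1 - t \<le> norm ((1 - t) *\<^sub>R A + t *\<^sub>R B)"
    unfolding y_def[symmetric] by (metis power2_eq_square power2_le_imp_le norm_ge_zero)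
  have pos: "0 < (1-t) * (1-t) + t * t"
  proof (cases "t = 0")
    case True then show ?thesis by simp
  next
    case False then have "0 < t * t" by (metis not_real_square_gt_zero)
    moreover have "0 \<le> (1-t) * (1-t)" by simp
    ultimately show ?thesis by linarith
  qed
  show "(1 - t) *\<^sub>R A + t *\<^sub>R B \<noteq> 0"
  proof
    assume "(1 - t) *\<^sub>R A + t *\<^sub>R B = 0"
    then have "y \<bullet> y = 0" by (simp add: y_def)
    moreover have "0 < y \<bullet> y" using e pos nn by linarith
    ultimately show False by simp
  qed
qed

lemma pos_comb: fixes p q t :: real assumes "0 \<le> t" "t \<le> 1" "0 \<le> p" "0 \<le> q" "0 < p \<or> 0 < q"
  "t < 1 \<or> 0 < q" "0 < t \<or> 0 < p"
  shows "0 < (1 - t) * p + t * q"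
proof -
  have a: "0 \<le> (1 - t) * p" "0 \<le> t * q" using assms by simp_all
  consider "t < 1" "0 < p" | "0 < t" "0 < q" using assms by linarith
  then show ?thesis
  proof cases
    case 1
    then have "0 < (1 - t) * p" by simp
    then show ?thesis using a by linarith
  next
    case 2
    then have "0 < t * q" by simp
    then show ?thesis using a by linarith
  qed
qed

definition arc :: "'a::euclidean_space \<Rightarrow> 'a \<Rightarrow> 'a set" where
  "arc A B = (\<lambda>t. sgn ((1 - t) *\<^sub>R A + t *\<^sub>R B)) ` {0..1}"

lemma arc_props:
  fixes A B :: "'a::euclidean_space"
  assumes "norm A = 1" "norm B = 1" "\<forall>t\<in>{0..1}. (1 - t) *\<^sub>R A + t *\<^sub>R B \<noteq> 0"
  shows "connected (arc A B)" "A \<in> arc A B" "B \<in> arc A B"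
proof -
  have "continuous_on {0..1} (\<lambda>t. (1 - t) *\<^sub>R A + t *\<^sub>R B)"
    by (intro continuous_intros)
  then have "continuous_on {0..1} (\<lambda>t. sgn ((1 - t) *\<^sub>R A + t *\<^sub>R B))"
    using assms(3) by (rule continuous_on_sgn)
  then show "connected (arc A B)" unfolding arc_def by (rule connected_continuous_image) simp
  show "A \<in> arc A B" unfolding arc_def using assms
    by (intro image_eqI[of _ _ 0]) (simp_all add: sgn_unit)
  show "B \<in> arc A B" unfolding arc_def using assms
    by (intro image_eqI[of _ _ 1]) (simp_all add: sgn_unit)
qed


locale cdb = sbody +
  fixes \<tau> :: real
  assumes tpos: "0 < \<tau>" and tlt: "\<tau> < pi" and cd: "constant_diameter C \<tau>"
begin

lemma ib: assumes "P \<in> C" "Q \<in> C" shows "-1 \<le> P \<bullet> Q" "P \<bullet> Q \<le> 1"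
  using inner_bound1[OF nC[OF assms(1)] nC[OF assms(2)]] by auto

lemma s_pos: "0 < sin \<tau>" using tpos tlt by (simp add: sin_gt_zero)
lemma c_lt1: "cos \<tau> < 1" using tpos tlt cos_monotone_0_pi[of 0 \<tau>] by simp
lemma c_gtm1: "-1 < cos \<tau>" using tpos tlt cos_monotone_0_pi[of \<tau> pi] by simp
lemma cs2: "(cos \<tau>)\<^sup>2 + (sin \<tau>)\<^sup>2 = 1" by simp

lemma dist_set: "sdiameter C = Sup {arccos (P \<bullet> Q) | P Q. P \<in> C \<and> Q \<in> C}"
  by (simp add: sdiameter_def sdist_def)

lemma bdd: "bdd_above {arccos (P \<bullet> Q) | P Q. P \<in> C \<and> Q \<in> C}"
  by (rule bdd_aboveI[of _ pi]) (auto intro!: arccos_ubound ib)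

lemma D1: assumes "P \<in> C" "Q \<in> C" shows "cos \<tau> \<le> P \<bullet> Q"
proof -
  have b: "-1 \<le> P \<bullet> Q" "P \<bullet> Q \<le> 1" using ib assms by auto
  have "arccos (P \<bullet> Q) \<le> Sup {arccos (P \<bullet> Q) | P Q. P \<in> C \<and> Q \<in> C}"
    using assms by (intro cSup_upper bdd) auto
  then have "arccos (P \<bullet> Q) \<le> \<tau>" using cd by (simp add: constant_diameter_def dist_set)
  then have "cos \<tau> \<le> cos (arccos (P \<bullet> Q))"
    using b tpos tlt by (subst cos_mono_le_eq) (auto intro: arccos_lbound arccos_ubound)
  then show ?thesis using b by simp
qed

lemma D2: assumes "P \<in> sboundary C" shows "\<exists>Q\<in>C. P \<bullet> Q = cos \<tau>"
proof -
  obtain Q where Q: "Q \<in> C" "sdist P Q = \<tau>" using cd assms by (auto simp: constant_diameter_def)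
  have PC: "P \<in> C"
  proof -
    have "closedin (top_of_set (sphere 0 1)) C"
      using closedin_closed_Int[OF clC, of "sphere 0 1"] CS by (simp add: Int_absorb1)
    then show ?thesis using assms closure_of_closedin by (auto simp: sboundary_def frontier_of_def)
  qed
  have b: "-1 \<le> P \<bullet> Q" "P \<bullet> Q \<le> 1" using ib PC Q by auto
  have "cos (arccos (P \<bullet> Q)) = cos \<tau>" using Q by (simp add: sdist_def)
  then show ?thesis using b Q by auto
qed

lemma pair_exists: "\<exists>P\<in>C. \<exists>Q\<in>C. P \<bullet> Q = cos \<tau>"
proof -
  have "continuous_on (C \<times> C) (\<lambda>z. fst z \<bullet> snd z)" by (intro continuous_intros)
  moreover have "compact (C \<times> C)" using cpC by (simp add: compact_Times)
  moreover have "C \<times> C \<noteq> {}" using oC by auto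
  ultimately obtain z where z: "z \<in> C \<times> C" "\<forall>y\<in>C \<times> C. fst z \<bullet> snd z \<le> fst y \<bullet> snd y"
    using continuous_attains_inf[of "C \<times> C" "\<lambda>z. fst z \<bullet> snd z"] by blast
  obtain P Q where PQ: "z = (P, Q)" "P \<in> C" "Q \<in> C" using z by auto
  have b: "-1 \<le> P \<bullet> Q" "P \<bullet> Q \<le> 1" using ib PQ by auto
  have "Sup {arccos (P \<bullet> Q) | P Q. P \<in> C \<and> Q \<in> C} = arccos (P \<bullet> Q)"
  proof (rule cSup_eq_maximum)
    show "arccos (P \<bullet> Q) \<in> {arccos (P \<bullet> Q) | P Q. P \<in> C \<and> Q \<in> C}" using PQ by blast
    fix x assume "x \<in> {arccos (P \<bullet> Q) | P Q. P \<in> C \<and> Q \<in> C}"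
    then obtain P' Q' where x: "x = arccos (P' \<bullet> Q')" "P' \<in> C" "Q' \<in> C" by blast
    have "P \<bullet> Q \<le> P' \<bullet> Q'" using z PQ x by force
    then show "x \<le> arccos (P \<bullet> Q)" using x b ib[of P' Q'] by (auto intro!: arccos_le_arccos)
  qed
  then have "arccos (P \<bullet> Q) = \<tau>" using cd by (simp add: constant_diameter_def dist_set)
  then have "cos (arccos (P \<bullet> Q)) = cos \<tau>" by simp
  then show ?thesis using b PQ by auto
qed

end

lemma hub_conn:
  assumes "hub \<in> U" "\<forall>X\<in>U. \<exists>A. connected A \<and> A \<subseteq> U \<and> X \<in> A \<and> hub \<in> A"
  shows "connected U"
proof -
  define F where "F = {A. connected A \<and> A \<subseteq> U \<and> hub \<in> A}"
  have "\<Union>F = U" using assms unfolding F_def by blast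
  moreover have "connected (\<Union>F)"
    by (rule connected_Union) (auto simp: F_def)
  ultimately show ?thesis by simp
qed

context cdb begin

lemma ctr_U: assumes Q: "Q \<in> C" shows "cos \<tau> < ctr \<bullet> Q"
proof (rule ccontr)
  assume "\<not> cos \<tau> < ctr \<bullet> Q"
  then have eq: "ctr \<bullet> Q = cos \<tau>" using D1[OF oC Q] by simp
  define w where "w = (Q - cos \<tau> *\<^sub>R ctr) /\<^sub>R sin \<tau>"
  note pu = perp_unit[OF no nC[OF Q] eq cs2 s_pos, folded w_def]
  obtain b0 where b0: "b0 > 0" "\<forall>b u. 0 < b \<and> b \<le> b0 \<and> norm u = 1 \<and> ctr \<bullet> u = 0 \<longrightarrow>
      sqrt (1 - b\<^sup>2) *\<^sub>R ctr + b *\<^sub>R u \<in> C" using rot_in_C by blast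
  define b where "b = min b0 (sin \<tau> / 2)"
  have sle: "sin \<tau> \<le> 1" by simp
  have s2: "sin \<tau> / 2 \<le> 1" using sle by linarith
  have bp: "0 < b" "b \<le> b0" "b \<le> sin \<tau> / 2" "b \<le> 1" using b0 s_pos s2 by (auto simp: b_def min_le_iff_disj)
  define a where "a = sqrt (1 - b\<^sup>2)"
  have sfa: "0 \<le> a" "a \<le> 1" "1 - a \<le> b\<^sup>2" using sqrt_facts[of b] bp by (auto simp: a_def)
  have WC: "a *\<^sub>R ctr + b *\<^sub>R (-w) \<in> C"
    using b0(2)[rule_format, of b "-w"] bp pu(1,2) by (simp add: a_def)
  have "(a *\<^sub>R ctr + b *\<^sub>R (-w)) \<bullet> Q = a * cos \<tau> - b * sin \<tau>"
    using eq pu(3) by (simp add: inner_add_left inner_diff_left inner_commute[of w Q])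
  moreover have "cos \<tau> \<le> (a *\<^sub>R ctr + b *\<^sub>R (-w)) \<bullet> Q" using D1[OF WC Q] .
  ultimately have h: "cos \<tau> \<le> a * cos \<tau> - b * sin \<tau>" by simp
  have bs: "0 < b * sin \<tau>" using bp s_pos by simp
  show False
  proof (cases "cos \<tau> \<ge> 0")
    case True
    then have "a * cos \<tau> \<le> cos \<tau>" using sfa by (simp add: mult_left_le_one_le)
    then show False using h bs by simp
  next
    case False
    have "a * cos \<tau> - cos \<tau> = (1 - a) * (- cos \<tau>)" by (simp add: algebra_simps)
    also have "\<dots> \<le> (1 - a) * 1" using sfa c_gtm1 by (intro mult_left_mono) auto
    also have "\<dots> \<le> b\<^sup>2" using sfa by simp
    also have "\<dots> = b * b" by (simp add: power2_eq_square)
    also have "\<dots> \<le> b * (sin \<tau> / 2)" using bp by (intro mult_left_mono) auto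
    finally have "a * cos \<tau> - cos \<tau> \<le> b * (sin \<tau> / 2)" .
    then show False using h bs by simp
  qed
qed

lemma goodh:
  assumes X: "norm X = 1" and XC: "\<forall>Q\<in>C. cos \<tau> \<le> X \<bullet> Q"
  shows "\<exists>h. norm h = 1 \<and> (\<forall>Q\<in>C. 0 < h \<bullet> Q) \<and> 0 \<le> X \<bullet> h"
proof (rule ccontr)
  assume nex: "\<not> ?thesis"
  obtain h0 \<beta> where h0: "norm h0 = 1" "\<beta> > 0" "\<forall>Q\<in>C. \<beta> \<le> h0 \<bullet> Q" using strict_polar by blast
  have h0pos: "\<forall>Q\<in>C. 0 < h0 \<bullet> Q" using h0 by (auto intro: less_le_trans)
  have bneg: "X \<bullet> h0 < 0" using nex h0 h0pos by force
  have "-X \<in> spolar (spolar C)"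
    unfolding spolar_iff
  proof (intro conjI ballI)
    show "norm (-X) = 1" using X by simp
    fix g assume g: "g \<in> spolar C"
    show "0 \<le> g \<bullet> (-X)"
    proof (rule ccontr)
      assume "\<not> 0 \<le> g \<bullet> (-X)"
      then have apos: "0 < X \<bullet> g" by (simp add: inner_commute)
      define a where "a = X \<bullet> g"
      define b where "b = X \<bullet> h0"
      define t where "t = a / (2 * (a - b))"
      have ab: "0 < a" "b < 0" using apos bneg by (auto simp: a_def b_def)
      have t: "0 < t" "t \<le> 1" using ab by (auto simp: t_def field_simps)
      define y where "y = (1 - t) *\<^sub>R g + t *\<^sub>R h0"
      have yQ: "\<forall>Q\<in>C. 0 < y \<bullet> Q"
      proof
        fix Q assume Q: "Q \<in> C"
        have "0 \<le> g \<bullet> Q" using g Q by (auto simp: spolar_iff inner_commute)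
        then have "0 \<le> (1 - t) * (g \<bullet> Q)" using t by simp
        moreover have "0 < t * (h0 \<bullet> Q)" using t h0pos Q by simp
        ultimately show "0 < y \<bullet> Q" by (simp add: y_def inner_add_left)
      qed
      then have y0: "y \<noteq> 0" using oC by auto
      have "X \<bullet> y = (1 - t) * a + t * b" by (simp add: y_def a_def b_def inner_add_right)
      also have "\<dots> = a - t * (a - b)" by (simp add: algebra_simps)
      also have "\<dots> = a / 2"
      proof -
        have "t * (a - b) = a / 2" using ab by (simp add: t_def field_simps)
        then show ?thesis by simp
      qed
      finally have Xy: "0 < X \<bullet> y" using ab by simp
      have "norm (sgn y) = 1 \<and> (\<forall>Q\<in>C. 0 < sgn y \<bullet> Q) \<and> 0 \<le> X \<bullet> sgn y"
        using y0 yQ Xy by (auto simp: norm_sgn sgn_div_norm)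
      then show False using nex by blast
    qed
  qed
  then have "-X \<in> C" using bipolar by simp
  then have "cos \<tau> \<le> X \<bullet> (-X)" using XC by blast
  then show False using X c_gtm1 by (simp add: dot_square_norm)
qed

definition "U = {X. norm X = 1 \<and> (\<forall>Q\<in>C. cos \<tau> < X \<bullet> Q)}"

lemma good_sgn: assumes "\<forall>Q\<in>C. cos \<tau> * norm y < y \<bullet> Q" shows "y \<noteq> 0" "sgn y \<in> U"
proof -
  show y0: "y \<noteq> 0" using assms oC by fastforce
  have "\<forall>Q\<in>C. cos \<tau> < sgn y \<bullet> Q"
  proof
    fix Q assume "Q \<in> C"
    then have "cos \<tau> * norm y < y \<bullet> Q" using assms by blast
    then have "cos \<tau> < (y \<bullet> Q) / norm y" using y0 by (simp add: pos_less_divide_eq)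
    then show "cos \<tau> < sgn y \<bullet> Q" by (simp add: sgn_div_norm divide_inverse_commute)
  qed
  then show "sgn y \<in> U" using y0 by (simp add: U_def norm_sgn)
qed

lemma arc_U:
  assumes A: "norm A = 1" and B: "norm B = 1"
    and g: "\<forall>t\<in>{0..1}. \<forall>Q\<in>C. cos \<tau> * norm ((1 - t) *\<^sub>R A + t *\<^sub>R B) < ((1 - t) *\<^sub>R A + t *\<^sub>R B) \<bullet> Q"
  shows "connected (arc A B) \<and> arc A B \<subseteq> U \<and> A \<in> arc A B \<and> B \<in> arc A B"
proof -
  have nz: "\<forall>t\<in>{0..1}. (1 - t) *\<^sub>R A + t *\<^sub>R B \<noteq> 0" using g good_sgn(1) by blast
  have "arc A B \<subseteq> U" unfolding arc_def using g good_sgn(2) by blast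
  then show ?thesis using arc_props[OF A B nz] by blast
qed

end

context cdb begin

lemma U_conn: "connected U"
proof (cases "cos \<tau> > 0")
  case cpos: True
  show ?thesis
  proof (rule hub_conn[of ctr])
    have "\<forall>Q\<in>C. cos \<tau> < ctr \<bullet> Q" using ctr_U by blast
    then show ctrU: "ctr \<in> U" using no by (simp add: U_def)
    show "\<forall>X\<in>U. \<exists>A. connected A \<and> A \<subseteq> U \<and> X \<in> A \<and> ctr \<in> A"
    proof
      fix X assume X: "X \<in> U"
      have nX: "norm X = 1" and XQ: "\<forall>Q\<in>C. cos \<tau> < X \<bullet> Q" using X by (auto simp: U_def)
      have "\<forall>t\<in>{0..1}. \<forall>Q\<in>C. cos \<tau> * norm ((1 - t) *\<^sub>R X + t *\<^sub>R ctr) < ((1 - t) *\<^sub>R X + t *\<^sub>R ctr) \<bullet> Q"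
      proof (intro ballI)
        fix t :: real and Q assume t: "t \<in> {0..1}" and Q: "Q \<in> C"
        have "cos \<tau> * norm ((1 - t) *\<^sub>R X + t *\<^sub>R ctr) \<le> cos \<tau> * 1"
          using norm_comb_le1[OF nX no, of t] t cpos by (intro mult_left_mono) auto
        moreover have "0 < (1 - t) * (X \<bullet> Q - cos \<tau>) + t * (ctr \<bullet> Q - cos \<tau>)"
          using t XQ Q ctr_U[OF Q] by (intro pos_comb) auto
        moreover have "((1 - t) *\<^sub>R X + t *\<^sub>R ctr) \<bullet> Q = (1 - t) * (X \<bullet> Q) + t * (ctr \<bullet> Q)"
          by (simp add: inner_add_left)
        ultimately show "cos \<tau> * norm ((1 - t) *\<^sub>R X + t *\<^sub>R ctr) < ((1 - t) *\<^sub>R X + t *\<^sub>R ctr) \<bullet> Q"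
          by (simp add: algebra_simps)
      qed
      then show "\<exists>A. connected A \<and> A \<subseteq> U \<and> X \<in> A \<and> ctr \<in> A" using arc_U[OF nX no] by blast
    qed
  qed
next
  case cneg: False
  obtain h0 \<beta> where h0: "norm h0 = 1" "\<beta> > 0" "\<forall>Q\<in>C. \<beta> \<le> h0 \<bullet> Q" using strict_polar by blast
  have h0pos: "\<forall>Q\<in>C. 0 < h0 \<bullet> Q" using h0 by (auto intro: less_le_trans)
  show ?thesis
  proof (rule hub_conn[of h0])
    show "h0 \<in> U" using h0 h0pos cneg by (auto simp: U_def intro: le_less_trans)
    show "\<forall>X\<in>U. \<exists>A. connected A \<and> A \<subseteq> U \<and> X \<in> A \<and> h0 \<in> A"
    proof
      fix X assume X: "X \<in> U"
      have nX: "norm X = 1" and XQ: "\<forall>Q\<in>C. cos \<tau> < X \<bullet> Q" using X by (auto simp: U_def)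
      obtain h where h: "norm h = 1" "\<forall>Q\<in>C. 0 < h \<bullet> Q" "0 \<le> X \<bullet> h"
        using goodh[OF nX] XQ by (meson less_imp_le)
      have a1: "\<forall>t\<in>{0..1}. \<forall>Q\<in>C. cos \<tau> * norm ((1 - t) *\<^sub>R X + t *\<^sub>R h) < ((1 - t) *\<^sub>R X + t *\<^sub>R h) \<bullet> Q"
      proof (intro ballI)
        fix t :: real and Q assume t: "t \<in> {0..1}" and Q: "Q \<in> C"
        have "1 - t \<le> norm ((1 - t) *\<^sub>R X + t *\<^sub>R h)" using norm_comb_ge(1)[OF nX h(1) h(3)] t by auto
        then have "cos \<tau> * norm ((1 - t) *\<^sub>R X + t *\<^sub>R h) \<le> cos \<tau> * (1 - t)"
          using cneg by (intro mult_left_mono_neg) auto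
        moreover have "0 < (1 - t) * (X \<bullet> Q - cos \<tau>) + t * (h \<bullet> Q)"
          using t XQ Q h(2) by (intro pos_comb) auto
        moreover have "((1 - t) *\<^sub>R X + t *\<^sub>R h) \<bullet> Q = (1 - t) * (X \<bullet> Q) + t * (h \<bullet> Q)"
          by (simp add: inner_add_left)
        ultimately show "cos \<tau> * norm ((1 - t) *\<^sub>R X + t *\<^sub>R h) < ((1 - t) *\<^sub>R X + t *\<^sub>R h) \<bullet> Q"
          by (simp add: algebra_simps)
      qed
      have a2: "\<forall>t\<in>{0..1}. \<forall>Q\<in>C. cos \<tau> * norm ((1 - t) *\<^sub>R h + t *\<^sub>R h0) < ((1 - t) *\<^sub>R h + t *\<^sub>R h0) \<bullet> Q"
      proof (intro ballI)
        fix t :: real and Q assume t: "t \<in> {0..1}" and Q: "Q \<in> C"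
        have "cos \<tau> * norm ((1 - t) *\<^sub>R h + t *\<^sub>R h0) \<le> 0"
          using cneg by (simp add: mult_nonpos_nonneg)
        moreover have "0 < (1 - t) * (h \<bullet> Q) + t * (h0 \<bullet> Q)"
          using t Q h(2) h0pos by (intro pos_comb) auto
        moreover have "((1 - t) *\<^sub>R h + t *\<^sub>R h0) \<bullet> Q = (1 - t) * (h \<bullet> Q) + t * (h0 \<bullet> Q)"
          by (simp add: inner_add_left)
        ultimately show "cos \<tau> * norm ((1 - t) *\<^sub>R h + t *\<^sub>R h0) < ((1 - t) *\<^sub>R h + t *\<^sub>R h0) \<bullet> Q"
          by simp
      qed
      note A1 = arc_U[OF nX h(1) a1] and A2 = arc_U[OF h(1) h0(1) a2]
      have "connected (arc X h \<union> arc h h0)" using A1 A2 by (intro connected_Un) auto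
      then show "\<exists>A. connected A \<and> A \<subseteq> U \<and> X \<in> A \<and> h0 \<in> A"
        using A1 A2 by (intro exI[of _ "arc X h \<union> arc h h0"]) auto
    qed
  qed
qed

lemma U_sub: "U \<subseteq> C"
proof -
  obtain Ti where Ti: "open Ti" "(top_of_set (sphere 0 1)) interior_of C = sphere 0 1 \<inter> Ti"
    using interior_open by blast
  have oV: "open (- C)" using clC by (simp add: open_Compl)
  have cov: "U \<subseteq> Ti \<union> (- C)"
  proof
    fix X assume X: "X \<in> U"
    show "X \<in> Ti \<union> - C"
    proof (cases "X \<in> C")
      case True
      have "X \<in> (top_of_set (sphere 0 1)) interior_of C"
      proof (rule ccontr)
        assume "X \<notin> (top_of_set (sphere 0 1)) interior_of C"
        then have "X \<in> sboundary C" using frontier_intro True by blast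
        then obtain Q where Q: "Q \<in> C" "X \<bullet> Q = cos \<tau>" using D2 by blast
        have "cos \<tau> < X \<bullet> Q" using X Q(1) unfolding U_def by blast
        then show False using Q(2) by simp
      qed
      then have "X \<in> sphere 0 1 \<inter> Ti" unfolding Ti(2) .
      then have "X \<in> Ti" by simp
      then show ?thesis by blast
    next
      case False
      then show ?thesis by blast
    qed
  qed
  have sub: "Ti \<inter> U \<subseteq> C"
  proof
    fix X assume X: "X \<in> Ti \<inter> U"
    have n: "norm X = 1" using X by (simp add: U_def)
    have "X \<in> sphere 0 1 \<inter> Ti" using X n by simp
    then have "X \<in> (top_of_set (sphere 0 1)) interior_of C" by (simp add: Ti(2))
    then show "X \<in> C" by (meson interior_of_subset subsetD)
  qed
  have dis: "Ti \<inter> (- C) \<inter> U = {}" using sub by blast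
  have "Ti \<inter> U = {} \<or> (- C) \<inter> U = {}"
    by (rule connectedD[OF U_conn Ti(1) oV dis cov])
  moreover have "ctr \<in> Ti \<inter> U"
  proof -
    have "ctr \<in> sphere 0 1 \<inter> Ti" using ctr_interior unfolding Ti(2) .
    then have "ctr \<in> Ti" by blast
    moreover have "\<forall>Q\<in>C. cos \<tau> < ctr \<bullet> Q" using ctr_U by blast
    then have "ctr \<in> U" using no unfolding U_def by blast
    ultimately show ?thesis by blast
  qed
  ultimately have "(- C) \<inter> U = {}" by blast
  then show ?thesis by blast
qed

lemma COMP:
  assumes X: "norm X = 1" and XC: "\<forall>Q\<in>C. cos \<tau> \<le> X \<bullet> Q"
  shows "X \<in> C"
proof (rule ccontr)
  assume XnC: "X \<notin> C"
  have "open (- C)" using clC by auto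
  then obtain r where r: "r > 0" "ball X r \<subseteq> - C" using XnC open_contains_ball by blast
  obtain h where h: "norm h = 1" "\<forall>Q\<in>C. cos \<tau> < h \<bullet> Q" "cos \<tau> > 0 \<or> (0 \<le> X \<bullet> h \<and> (\<forall>Q\<in>C. 0 < h \<bullet> Q))"
  proof (cases "cos \<tau> > 0")
    case True
    then show ?thesis using that[of ctr] no ctr_U by blast
  next
    case False
    obtain h where h: "norm h = 1" "\<forall>Q\<in>C. 0 < h \<bullet> Q" "0 \<le> X \<bullet> h" using goodh[OF X XC] by blast
    have "\<forall>Q\<in>C. cos \<tau> < h \<bullet> Q" using h(2) False by (auto intro: le_less_trans)
    then show ?thesis using that[of h] h by blast
  qed
  define e where "e = min (1/2) (r/5)"
  have e: "0 < e" "e \<le> 1/2" "e \<le> r/5" using r by (auto simp: e_def)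
  define y where "y = (1 - e) *\<^sub>R X + e *\<^sub>R h"
  have good: "\<forall>Q\<in>C. cos \<tau> * norm y < y \<bullet> Q"
  proof
    fix Q assume Q: "Q \<in> C"
    have yQ: "y \<bullet> Q = (1 - e) * (X \<bullet> Q) + e * (h \<bullet> Q)" by (simp add: y_def inner_add_left)
    show "cos \<tau> * norm y < y \<bullet> Q"
    proof (cases "cos \<tau> > 0")
      case True
      have "cos \<tau> * norm y \<le> cos \<tau> * 1"
        using norm_comb_le1[OF X h(1), of e] e True by (intro mult_left_mono) (auto simp: y_def)
      moreover have "0 < (1 - e) * (X \<bullet> Q - cos \<tau>) + e * (h \<bullet> Q - cos \<tau>)"
      proof -
        have "0 \<le> (1 - e) * (X \<bullet> Q - cos \<tau>)" using e XC Q by simp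
        moreover have "0 < e * (h \<bullet> Q - cos \<tau>)" using e h Q by simp
        ultimately show ?thesis by linarith
      qed
      ultimately show ?thesis using yQ by (simp add: algebra_simps)
    next
      case False
      then have Xh: "0 \<le> X \<bullet> h" and hp: "0 < h \<bullet> Q" using h(3) Q by auto
      have "1 - e \<le> norm y" using norm_comb_ge(1)[OF X h(1) Xh, of e] e by (simp add: y_def)
      then have "cos \<tau> * norm y \<le> cos \<tau> * (1 - e)" using False by (intro mult_left_mono_neg) auto
      moreover have "0 < (1 - e) * (X \<bullet> Q - cos \<tau>) + e * (h \<bullet> Q)"
      proof -
        have "0 \<le> (1 - e) * (X \<bullet> Q - cos \<tau>)" using e XC Q by simp
        moreover have "0 < e * (h \<bullet> Q)" using e hp by simp
        ultimately show ?thesis by linarith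
      qed
      moreover have "y \<bullet> Q - cos \<tau> * (1 - e) = (1 - e) * (X \<bullet> Q - cos \<tau>) + e * (h \<bullet> Q)"
        using yQ by (simp add: algebra_simps)
      ultimately show ?thesis by linarith
    qed
  qed
  have y0: "y \<noteq> 0" and yU: "sgn y \<in> U" using good_sgn[OF good] by auto
  then have "sgn y \<in> C" using U_sub by blast
  moreover have "sgn y \<in> ball X r"
  proof -
    have "y - X = e *\<^sub>R (h - X)" by (simp add: y_def algebra_simps)
    then have "norm (y - X) = e * norm (h - X)" using e by simp
    also have "\<dots> \<le> e * 2"
    proof -
      have "norm (h - X) \<le> norm h + norm X" by (rule norm_triangle_ineq4)
      then show ?thesis using e h X by (intro mult_left_mono) auto
    qed
    finally have "norm (sgn y - X) \<le> 2 * (e * 2)" using sgn_close[OF X y0] by linarith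
    also have "\<dots> < r" using e r by linarith
    finally show ?thesis by (simp add: dist_norm norm_minus_commute)
  qed
  ultimately show False using r by blast
qed

end

context cdb begin

lemma D1': "\<forall>X\<in>C. \<forall>Y\<in>C. cos \<tau> \<le> X \<bullet> Y" using D1 by blast

definition "Phi P = {Y. norm Y = 1 \<and> P \<bullet> Y = 0 \<and> cos \<tau> *\<^sub>R P + sin \<tau> *\<^sub>R Y \<in> C}"

lemma Phi_polar: assumes P: "P \<in> C" and Y: "Y \<in> Phi P" shows "Y \<in> spolar C"
proof -
  have nY: "norm Y = 1" and PY: "P \<bullet> Y = 0" and Q: "cos \<tau> *\<^sub>R P + sin \<tau> *\<^sub>R Y \<in> C"
    using Y by (auto simp: Phi_def)
  have PP: "P \<bullet> P = 1" using nC[OF P] by (simp add: dot_square_norm)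
  have PQ: "P \<bullet> (cos \<tau> *\<^sub>R P + sin \<tau> *\<^sub>R Y) = cos \<tau>" using PP PY by (simp add: inner_add_right)
  show ?thesis
    unfolding spolar_iff
  proof (intro conjI ballI)
    show "norm Y = 1" by (rule nY)
    fix Z assume Z: "Z \<in> C"
    have "0 \<le> Z \<bullet> ((cos \<tau> *\<^sub>R P + sin \<tau> *\<^sub>R Y) - cos \<tau> *\<^sub>R P)"
      by (rule far_pair[OF sc P Q D1' PQ Z])
    then have "0 \<le> sin \<tau> * (Z \<bullet> Y)" by simp
    then show "0 \<le> Z \<bullet> Y" using s_pos by (simp add: zero_le_mult_iff)
  qed
qed

lemma Phi_compact: assumes P: "P \<in> C" shows "compact (Phi P)" "Phi P \<subseteq> sphere 0 1"
proof -
  show sub: "Phi P \<subseteq> sphere 0 1" by (auto simp: Phi_def)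
  have e: "Phi P = sphere 0 1 \<inter> {Y. P \<bullet> Y = 0} \<inter> (\<lambda>Y. cos \<tau> *\<^sub>R P + sin \<tau> *\<^sub>R Y) -` C"
    by (auto simp: Phi_def)
  have "closed ((\<lambda>Y. cos \<tau> *\<^sub>R P + sin \<tau> *\<^sub>R Y) -` C)"
    by (rule continuous_closed_vimage[OF clC]) (intro continuous_intros)
  then have "closed (Phi P)" unfolding e by (intro closed_Int closed_hyperplane) auto
  moreover have "bounded (Phi P)" using sub bounded_subset bounded_sphere by blast
  ultimately show "compact (Phi P)" by (simp add: compact_eq_bounded_closed)
qed

lemma Phi_closure:
  assumes P: "P \<in> C" and Y1: "Y1 \<in> Phi P" and Y2: "Y2 \<in> Phi P"
    and ab: "0 \<le> \<alpha>" "0 \<le> \<beta>" and w0: "\<alpha> *\<^sub>R Y1 + \<beta> *\<^sub>R Y2 \<noteq> 0"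
  shows "sgn (\<alpha> *\<^sub>R Y1 + \<beta> *\<^sub>R Y2) \<in> Phi P"
proof -
  define w where "w = \<alpha> *\<^sub>R Y1 + \<beta> *\<^sub>R Y2"
  have w0': "w \<noteq> 0" using w0 by (simp add: w_def)
  have nP: "norm P = 1" using nC P by simp
  have PP: "P \<bullet> P = 1" using nP by (simp add: dot_square_norm)
  have Y1p: "norm Y1 = 1" "P \<bullet> Y1 = 0" "cos \<tau> *\<^sub>R P + sin \<tau> *\<^sub>R Y1 \<in> C" using Y1 by (auto simp: Phi_def)
  have Y2p: "norm Y2 = 1" "P \<bullet> Y2 = 0" "cos \<tau> *\<^sub>R P + sin \<tau> *\<^sub>R Y2 \<in> C" using Y2 by (auto simp: Phi_def)
  have Pw: "P \<bullet> w = 0" using Y1p Y2p by (simp add: w_def inner_add_right)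
  have nsw: "norm (sgn w) = 1" using w0' by (simp add: norm_sgn)
  have Psw: "P \<bullet> sgn w = 0" using Pw by (simp add: sgn_div_norm)
  show ?thesis
  proof (cases "cos \<tau> \<ge> 0")
    case cpos: True
    define Q where "Q = cos \<tau> *\<^sub>R P + sin \<tau> *\<^sub>R sgn w"
    have nQ: "norm Q = 1" unfolding Q_def by (rule rot_unit[OF nP nsw Psw cs2])
    have "\<forall>Z\<in>C. cos \<tau> \<le> Z \<bullet> Q"
    proof
      fix Z assume Z: "Z \<in> C"
      define \<kappa> where "\<kappa> = cos \<tau> * (1 - Z \<bullet> P)"
      have k0: "0 \<le> \<kappa>" using cpos ib(2)[OF Z P] by (simp add: \<kappa>_def)
      have k1: "\<kappa> \<le> sin \<tau> * (Z \<bullet> Y1)"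
        using D1[OF Z Y1p(3)] by (simp add: \<kappa>_def inner_add_right algebra_simps)
      have k2: "\<kappa> \<le> sin \<tau> * (Z \<bullet> Y2)"
        using D1[OF Z Y2p(3)] by (simp add: \<kappa>_def inner_add_right algebra_simps)
      have "sin \<tau> * (Z \<bullet> w) = \<alpha> * (sin \<tau> * (Z \<bullet> Y1)) + \<beta> * (sin \<tau> * (Z \<bullet> Y2))"
        by (simp add: w_def inner_add_right algebra_simps)
      also have "\<dots> \<ge> \<alpha> * \<kappa> + \<beta> * \<kappa>"
        using k1 k2 ab by (intro add_mono mult_left_mono) auto
      finally have h1: "(\<alpha> + \<beta>) * \<kappa> \<le> sin \<tau> * (Z \<bullet> w)" by (simp add: algebra_simps)
      have "norm w \<le> norm (\<alpha> *\<^sub>R Y1) + norm (\<beta> *\<^sub>R Y2)" unfolding w_def by (rule norm_triangle_ineq)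
      also have "\<dots> = \<alpha> + \<beta>" using ab Y1p Y2p by simp
      finally have "norm w * \<kappa> \<le> (\<alpha> + \<beta>) * \<kappa>" using k0 by (intro mult_right_mono) auto
      then have "norm w * \<kappa> \<le> sin \<tau> * (Z \<bullet> w)" using h1 by linarith
      then have "\<kappa> \<le> sin \<tau> * (Z \<bullet> w) / norm w" using w0' by (simp add: pos_le_divide_eq mult.commute)
      also have "\<dots> = sin \<tau> * (Z \<bullet> sgn w)" by (simp add: sgn_div_norm divide_inverse_commute)
      finally have "\<kappa> \<le> sin \<tau> * (Z \<bullet> sgn w)" .
      then show "cos \<tau> \<le> Z \<bullet> Q" by (simp add: Q_def \<kappa>_def inner_add_right algebra_simps)
    qed
    then have "\<forall>Z\<in>C. cos \<tau> \<le> Q \<bullet> Z" by (simp add: inner_commute)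
    then have "Q \<in> C" using COMP[OF nQ] by blast
    then show ?thesis using nsw Psw by (simp add: Phi_def Q_def w_def)
  next
    case cneg: False
    have "Y1 = Y2"
    proof (rule ccontr)
      assume ne: "Y1 \<noteq> Y2"
      define Q1 where "Q1 = cos \<tau> *\<^sub>R P + sin \<tau> *\<^sub>R Y1"
      define Q2 where "Q2 = cos \<tau> *\<^sub>R P + sin \<tau> *\<^sub>R Y2"
      have Q12: "Q1 \<in> C" "Q2 \<in> C" using Y1p Y2p by (simp_all add: Q1_def Q2_def)
      have nQ: "norm Q1 = 1" "norm Q2 = 1" using nC Q12 by auto
      have "Q1 \<noteq> Q2" using ne s_pos by (simp add: Q1_def Q2_def)
      have PQ: "P \<bullet> (Q1 + Q2) = 2 * cos \<tau>" using PP Y1p Y2p by (simp add: Q1_def Q2_def inner_add_right)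
      have s0: "1 *\<^sub>R Q1 + 1 *\<^sub>R Q2 \<noteq> 0" using PQ cneg by auto
      have MC: "sgn (Q1 + Q2) \<in> C" using sc_comb[OF sc Q12(1) Q12(2), of 1 1] s0 by simp
      have "Q1 \<bullet> Q2 < 1"
      proof -
        have le: "Q1 \<bullet> Q2 \<le> 1" using inner_bound1[OF nQ] by simp
        have "Q1 \<bullet> Q2 \<noteq> 1"
        proof
          assume e1: "Q1 \<bullet> Q2 = 1"
          have "(norm (Q1 - Q2))\<^sup>2 = (Q1 - Q2) \<bullet> (Q1 - Q2)" by (simp add: dot_square_norm)
          also have "\<dots> = Q1 \<bullet> Q1 - 2 * (Q1 \<bullet> Q2) + Q2 \<bullet> Q2"
            by (simp add: inner_diff_left inner_diff_right inner_commute[of Q2 Q1])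
          also have "\<dots> = 0" using e1 nQ by (simp add: dot_square_norm)
          finally have "norm (Q1 - Q2) = 0" by simp
          then show False using \<open>Q1 \<noteq> Q2\<close> by simp
        qed
        then show ?thesis using le by simp
      qed
      have "(norm (Q1 + Q2))\<^sup>2 = (Q1 + Q2) \<bullet> (Q1 + Q2)" by (simp add: dot_square_norm)
      also have "\<dots> = Q1 \<bullet> Q1 + 2 * (Q1 \<bullet> Q2) + Q2 \<bullet> Q2"
        by (simp add: inner_add_left inner_add_right inner_commute[of Q2 Q1])
      also have "\<dots> = 2 + 2 * (Q1 \<bullet> Q2)" using nQ by (simp add: dot_square_norm)
      finally have "(norm (Q1 + Q2))\<^sup>2 = 2 + 2 * (Q1 \<bullet> Q2)" .
      then have r2: "(norm (Q1 + Q2))\<^sup>2 < 2\<^sup>2" using \<open>Q1 \<bullet> Q2 < 1\<close> by simp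
      then have rlt: "norm (Q1 + Q2) < 2" using power2_less_imp_less by fastforce
      have rpos: "0 < norm (Q1 + Q2)" using s0 by simp
      have "cos \<tau> \<le> P \<bullet> sgn (Q1 + Q2)" using D1[OF P MC] .
      also have "P \<bullet> sgn (Q1 + Q2) = 2 * cos \<tau> / norm (Q1 + Q2)"
        using PQ by (simp add: sgn_div_norm divide_inverse_commute)
      finally have "cos \<tau> * norm (Q1 + Q2) \<le> 2 * cos \<tau>" using rpos by (simp add: le_divide_eq)
      moreover have "2 * cos \<tau> < cos \<tau> * norm (Q1 + Q2)"
      proof -
        have "cos \<tau> * 2 < cos \<tau> * norm (Q1 + Q2)" using rlt cneg by (intro mult_strict_left_mono_neg) auto
        then show ?thesis by simp
      qed
      ultimately show False by simp
    qed
    then have wY: "w = (\<alpha> + \<beta>) *\<^sub>R Y1" by (simp add: w_def algebra_simps)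
    moreover have "\<alpha> + \<beta> > 0" using w0' ab wY by (cases "\<alpha> + \<beta> = 0") auto
    ultimately have "sgn w = Y1" using Y1p by (simp add: sgn_scaleR sgn_unit)
    then show ?thesis using Y1 by (simp add: w_def)
  qed
qed

lemma Phi_cone: assumes P: "P \<in> C" shows "convex hull (Phi P) \<subseteq> {t *\<^sub>R u | t u. t > 0 \<and> u \<in> Phi P}"
proof (rule hull_minimal)
  show "Phi P \<subseteq> {t *\<^sub>R u | t u. t > 0 \<and> u \<in> Phi P}" by (auto intro!: exI[of _ 1])
  show "convex {t *\<^sub>R u | t u. t > 0 \<and> u \<in> Phi P}"
    unfolding convex_def
  proof (intro ballI allI impI)
    fix x y and u v :: real
    assume x: "x \<in> {t *\<^sub>R u | t u. t > 0 \<and> u \<in> Phi P}" and y: "y \<in> {t *\<^sub>R u | t u. t > 0 \<and> u \<in> Phi P}"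
      and uv: "0 \<le> u" "0 \<le> v" "u + v = 1"
    obtain t1 Y1 where 1: "x = t1 *\<^sub>R Y1" "t1 > 0" "Y1 \<in> Phi P" using x by blast
    obtain t2 Y2 where 2: "y = t2 *\<^sub>R Y2" "t2 > 0" "Y2 \<in> Phi P" using y by blast
    define z where "z = (u * t1) *\<^sub>R Y1 + (v * t2) *\<^sub>R Y2"
    have zz: "u *\<^sub>R x + v *\<^sub>R y = z" by (simp add: z_def 1 2)
    have p1: "0 < ctr \<bullet> Y1" "0 < ctr \<bullet> Y2" using polar_pos Phi_polar[OF P] 1 2 by auto
    have zc: "ctr \<bullet> z = (u * t1) * (ctr \<bullet> Y1) + (v * t2) * (ctr \<bullet> Y2)"
      by (simp add: z_def inner_add_right)
    have "0 < ctr \<bullet> z"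
    proof (cases "u = 0")
      case True
      then have "v = 1" using uv by simp
      then show ?thesis using zc True 2 p1 by simp
    next
      case False
      then have "u > 0" using uv by simp
      then have "0 < (u * t1) * (ctr \<bullet> Y1)" using 1 p1 by simp
      moreover have "0 \<le> (v * t2) * (ctr \<bullet> Y2)" using uv 2 p1 by simp
      ultimately show ?thesis using zc by linarith
    qed
    then have z0: "z \<noteq> 0" by auto
    have "sgn z \<in> Phi P" unfolding z_def
      using Phi_closure[OF P 1(3) 2(3), of "u * t1" "v * t2"] uv 1 2 z0 by (simp add: z_def)
    moreover have "z = norm z *\<^sub>R sgn z" using z0 by (simp add: sgn_div_norm)
    moreover have "norm z > 0" using z0 by simp
    ultimately show "u *\<^sub>R x + v *\<^sub>R y \<in> {t *\<^sub>R u | t u. t > 0 \<and> u \<in> Phi P}"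
      unfolding zz by blast
  qed
qed

end

context cdb begin

lemma CL:
  assumes P: "P \<in> C" and X: "X \<in> spolar C" and PX: "P \<bullet> X = 0"
  shows "cos \<tau> *\<^sub>R P + sin \<tau> *\<^sub>R X \<in> C"
proof -
  have nX: "norm X = 1" and XC: "\<forall>Z\<in>C. 0 \<le> Z \<bullet> X" using X by (auto simp: spolar_iff)
  have nP: "norm P = 1" using nC P by simp
  have PP: "P \<bullet> P = 1" using nP by (simp add: dot_square_norm)
  show ?thesis
  proof (cases "X \<in> Phi P")
    case True
    then show ?thesis by (simp add: Phi_def)
  next
    case False
    obtain h \<beta> where h: "norm h = 1" "\<beta> > 0" "h \<bullet> X \<le> -\<beta>" "\<forall>y\<in>Phi P. \<beta> \<le> h \<bullet> y"
      using sep_lemma[OF Phi_compact(2)[OF P] Phi_compact(1)[OF P] Phi_cone[OF P] nX False] by blast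
    define v where "v = h - (h \<bullet> P) *\<^sub>R P"
    have vX: "v \<bullet> X = h \<bullet> X" using PX by (simp add: v_def inner_diff_left inner_commute[of P X])
    have vY: "\<forall>Y\<in>Phi P. v \<bullet> Y = h \<bullet> Y" by (auto simp: v_def inner_diff_left Phi_def)
    have Pv: "P \<bullet> v = 0" using PP by (simp add: v_def inner_diff_right inner_commute[of P h])
    have v0: "v \<noteq> 0" using vX h by auto
    define u where "u = v /\<^sub>R norm v"
    define \<beta>' where "\<beta>' = \<beta> / norm v"
    have nv: "0 < norm v" using v0 by simp
    have nu: "norm u = 1" using v0 by (simp add: u_def)
    have Pu: "P \<bullet> u = 0" using Pv by (simp add: u_def)
    have b'pos: "\<beta>' > 0" using h nv by (simp add: \<beta>'_def)
    have uX: "u \<bullet> X \<le> -\<beta>'"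
    proof -
      have "v \<bullet> X / norm v \<le> - \<beta> / norm v" using vX h nv by (intro divide_right_mono) auto
      then show ?thesis by (simp add: u_def \<beta>'_def divide_inverse_commute)
    qed
    have uY: "\<forall>Y\<in>Phi P. \<beta>' \<le> u \<bullet> Y"
    proof
      fix Y assume Y: "Y \<in> Phi P"
      have "\<beta> / norm v \<le> v \<bullet> Y / norm v" using vY h Y nv by (intro divide_right_mono) auto
      then show "\<beta>' \<le> u \<bullet> Y" by (simp add: u_def \<beta>'_def divide_inverse_commute)
    qed
    have partner: "\<forall>Z\<in>C. Z \<bullet> P = cos \<tau> \<longrightarrow> sin \<tau> * \<beta>' \<le> Z \<bullet> u"
    proof (intro ballI impI)
      fix Z assume Z: "Z \<in> C" and ZP: "Z \<bullet> P = cos \<tau>"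
      define Y where "Y = (Z - cos \<tau> *\<^sub>R P) /\<^sub>R sin \<tau>"
      have PZ: "P \<bullet> Z = cos \<tau>" using ZP by (simp add: inner_commute)
      note pu = perp_unit[OF nP nC[OF Z] PZ cs2 s_pos, folded Y_def]
      have "Y \<in> Phi P" using pu Z by (simp add: Phi_def)
      then have "\<beta>' \<le> u \<bullet> Y" using uY by blast
      moreover have "Z \<bullet> u = sin \<tau> * (u \<bullet> Y)"
      proof -
        have "Z \<bullet> u = (cos \<tau> *\<^sub>R P + sin \<tau> *\<^sub>R Y) \<bullet> u" using pu(4) by simp
        also have "\<dots> = sin \<tau> * (u \<bullet> Y)" using Pu by (simp add: inner_add_left inner_commute[of Y u])
        finally show ?thesis .
      qed
      ultimately show "sin \<tau> * \<beta>' \<le> Z \<bullet> u" using s_pos by simp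
    qed
    define C1 where "C1 = {Z\<in>C. Z \<bullet> u \<le> sin \<tau> * \<beta>' / 2}"
    have sb: "0 < sin \<tau> * \<beta>'" using s_pos b'pos by simp
    obtain d where d: "d > 0" "\<forall>Z\<in>C1. cos \<tau> + d \<le> Z \<bullet> P"
    proof (cases "C1 = {}")
      case True
      then show ?thesis using that[of 1] by simp
    next
      case False
      have e1: "C1 = C \<inter> {Z. Z \<bullet> u \<le> sin \<tau> * \<beta>' / 2}" by (auto simp: C1_def)
      have "closed {Z. Z \<bullet> u \<le> sin \<tau> * \<beta>' / 2}"
        using closed_halfspace_le[of u "sin \<tau> * \<beta>' / 2"] by (simp add: inner_commute)
      then have cC1: "compact C1" unfolding e1 by (rule compact_Int_closed[OF cpC])
      have "continuous_on C1 (\<lambda>Z. Z \<bullet> P)" by (intro continuous_intros)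
      then obtain Z1 where Z1: "Z1 \<in> C1" "\<forall>Z\<in>C1. Z1 \<bullet> P \<le> Z \<bullet> P"
        using continuous_attains_inf[OF cC1 False] by blast
      have Z1C: "Z1 \<in> C" and Z1u: "Z1 \<bullet> u \<le> sin \<tau> * \<beta>' / 2" using Z1 by (auto simp: C1_def)
      have ge: "cos \<tau> \<le> Z1 \<bullet> P" using D1[OF Z1C P] .
      have "Z1 \<bullet> P \<noteq> cos \<tau>"
      proof
        assume "Z1 \<bullet> P = cos \<tau>"
        then have "sin \<tau> * \<beta>' \<le> Z1 \<bullet> u" using partner Z1C by blast
        then show False using Z1u sb by linarith
      qed
      then have "0 < Z1 \<bullet> P - cos \<tau>" using ge by simp
      then show ?thesis using that[of "Z1 \<bullet> P - cos \<tau>"] Z1 by force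
    qed
    define b where "b = min (1/2) (min (sin \<tau> * \<beta>' / 2) (d / 2))"
    have bp: "0 < b" "b \<le> 1/2" "b \<le> sin \<tau> * \<beta>' / 2" "b \<le> d / 2" using sb d by (auto simp: b_def)
    define a where "a = sqrt (1 - b\<^sup>2)"
    have sfa: "0 \<le> a" "a \<le> 1" "1 - a \<le> b\<^sup>2" "a\<^sup>2 + b\<^sup>2 = 1" using sqrt_facts[of b] bp by (auto simp: a_def)
    have bb: "b\<^sup>2 \<le> b" using bp by (simp add: power2_eq_square mult_left_le_one_le)
    define W where "W = a *\<^sub>R P + b *\<^sub>R u"
    have nW: "norm W = 1" unfolding W_def by (rule rot_unit[OF nP nu Pu sfa(4)])
    have "\<forall>Z\<in>C. cos \<tau> \<le> W \<bullet> Z"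
    proof
      fix Z assume Z: "Z \<in> C"
      have "W \<bullet> Z = a * (P \<bullet> Z) + b * (u \<bullet> Z)" by (simp add: W_def inner_add_left)
      then have WZ: "W \<bullet> Z = a * (Z \<bullet> P) + b * (Z \<bullet> u)" by (simp add: inner_commute[of P Z] inner_commute[of u Z])
      have Zu: "-1 \<le> Z \<bullet> u" using inner_bound1[OF nC[OF Z] nu] by simp
      have ZP1: "Z \<bullet> P \<le> 1" using ib(2)[OF Z P] .
      have ZPc: "cos \<tau> \<le> Z \<bullet> P" using D1[OF Z P] .
      show "cos \<tau> \<le> W \<bullet> Z"
      proof (cases "Z \<in> C1")
        case True
        have dP: "cos \<tau> + d \<le> Z \<bullet> P" using d True by blast
        have "(1 - a) * (Z \<bullet> P) \<le> (1 - a) * 1" using ZP1 sfa by (intro mult_left_mono) auto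
        then have "a * (Z \<bullet> P) \<ge> Z \<bullet> P - b" using sfa bb by (simp add: algebra_simps)
        moreover have "b * (-1) \<le> b * (Z \<bullet> u)" using Zu bp by (intro mult_left_mono) auto
        then have "b * (Z \<bullet> u) \<ge> - b" by simp
        ultimately show ?thesis using WZ dP bp by linarith
      next
        case False
        then have Zu2: "sin \<tau> * \<beta>' / 2 < Z \<bullet> u" using Z by (auto simp: C1_def)
        have "a * cos \<tau> \<le> a * (Z \<bullet> P)" using ZPc sfa by (intro mult_left_mono) auto
        moreover have "b * (sin \<tau> * \<beta>' / 2) \<le> b * (Z \<bullet> u)" using Zu2 bp by (intro mult_left_mono) auto
        moreover have "cos \<tau> \<le> a * cos \<tau> + b * (sin \<tau> * \<beta>' / 2)"
        proof (cases "cos \<tau> \<le> 0")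
          case True
          have "cos \<tau> \<le> a * cos \<tau>" using True sfa by (simp add: mult_le_cancel_right1)
          moreover have "0 \<le> b * (sin \<tau> * \<beta>' / 2)" using bp sb by simp
          ultimately show ?thesis by linarith
        next
          case False
          have "cos \<tau> - a * cos \<tau> = (1 - a) * cos \<tau>" by (simp add: algebra_simps)
          also have "\<dots> \<le> (1 - a) * 1" using sfa c_lt1 by (intro mult_left_mono) auto
          also have "\<dots> \<le> b * b" using sfa by (simp add: power2_eq_square)
          also have "\<dots> \<le> b * (sin \<tau> * \<beta>' / 2)" using bp by (intro mult_left_mono) auto
          finally show ?thesis by simp
        qed
        ultimately show ?thesis using WZ by linarith
      qed
    qed
    then have WC: "W \<in> C" using COMP[OF nW] by blast
    have "0 \<le> W \<bullet> X" using XC WC by blast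
    moreover have "W \<bullet> X = b * (u \<bullet> X)" using PX by (simp add: W_def inner_add_left)
    moreover have "b * (u \<bullet> X) < 0"
    proof -
      have "u \<bullet> X < 0" using uX b'pos by linarith
      then show ?thesis using bp by (simp add: mult_pos_neg)
    qed
    ultimately show ?thesis by simp
  qed
qed

end

lemma sq_lt: fixes a b :: real assumes "0 \<le> b" "a\<^sup>2 < b\<^sup>2" shows "a < b"
  using power2_less_imp_less[OF assms(2) assms(1)] .

lemma trig_ineq:
  fixes c s e s' :: real
  assumes sp: "s > 0" and s'p: "s' > 0" and sn: "s\<^sup>2 = 1 - c\<^sup>2" and s'2: "s'\<^sup>2 = 1 - e\<^sup>2" and elt: "e < - c"
  shows "c * s' + s * e < 0"
proof (cases "c \<le> 0")
  case True
  show ?thesis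
  proof (cases "e < 0")
    case True
    then have "s * e < 0" using sp by (simp add: mult_pos_neg)
    moreover have "c * s' \<le> 0" using \<open>c \<le> 0\<close> s'p by (simp add: mult_nonpos_nonneg)
    ultimately show ?thesis by simp
  next
    case False
    have "e\<^sup>2 < (- c)\<^sup>2" by (rule power_strict_mono) (use False elt in auto)
    then have ec: "e\<^sup>2 < c\<^sup>2" by simp
    have a1: "(s * e)\<^sup>2 = s\<^sup>2 * e\<^sup>2" by (simp add: power_mult_distrib)
    have a2: "(- c * s')\<^sup>2 = c\<^sup>2 * s'\<^sup>2" by (simp add: power_mult_distrib)
    have "s\<^sup>2 * e\<^sup>2 < c\<^sup>2 * s'\<^sup>2"
    proof -
      have "s\<^sup>2 * e\<^sup>2 = e\<^sup>2 - c\<^sup>2 * e\<^sup>2" using sn by (simp add: left_diff_distrib)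
      moreover have "c\<^sup>2 * s'\<^sup>2 = c\<^sup>2 - c\<^sup>2 * e\<^sup>2" using s'2 by (simp add: right_diff_distrib)
      ultimately show ?thesis using ec by linarith
    qed
    then have "(s * e)\<^sup>2 < (- c * s')\<^sup>2" using a1 a2 by simp
    then have "s * e < - c * s'" by (rule power2_less_imp_less) (use True s'p in \<open>auto simp: mult_nonpos_nonneg\<close>)
    then show ?thesis by simp
  qed
next
  case False
  then have epos: "0 < - e" using elt by simp
  have "c\<^sup>2 < (- e)\<^sup>2" by (rule power_strict_mono) (use False elt in auto)
  then have ec: "c\<^sup>2 < e\<^sup>2" by simp
  have a1: "(s * (- e))\<^sup>2 = s\<^sup>2 * e\<^sup>2" by (simp add: power_mult_distrib)
  have a2: "(c * s')\<^sup>2 = c\<^sup>2 * s'\<^sup>2" by (simp add: power_mult_distrib)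
  have "c\<^sup>2 * s'\<^sup>2 < s\<^sup>2 * e\<^sup>2"
  proof -
    have "s\<^sup>2 * e\<^sup>2 = e\<^sup>2 - c\<^sup>2 * e\<^sup>2" using sn by (simp add: left_diff_distrib)
    moreover have "c\<^sup>2 * s'\<^sup>2 = c\<^sup>2 - c\<^sup>2 * e\<^sup>2" using s'2 by (simp add: right_diff_distrib)
    ultimately show ?thesis using ec by linarith
  qed
  then have "(c * s')\<^sup>2 < (s * (- e))\<^sup>2" using a1 a2 by simp
  then have "c * s' < s * (- e)" by (rule power2_less_imp_less) (use sp epos in \<open>auto simp: mult_pos_neg less_imp_le\<close>)
  then show ?thesis by simp
qed


context cdb begin

lemma polar_compact: "compact (spolar C)"
proof -
  have "spolar C \<subseteq> sphere 0 1" by (auto simp: spolar_iff)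
  then show ?thesis using closed_spolar bounded_sphere
    by (meson bounded_subset compact_eq_bounded_closed)
qed

lemma polar_nonantipodal: assumes "X \<in> spolar C" "Y \<in> spolar C" shows "-1 < X \<bullet> Y"
proof -
  have nX: "norm X = 1" and nY: "norm Y = 1" using assms by (auto simp: spolar_iff)
  have le: "-1 \<le> X \<bullet> Y" using inner_bound1[OF nX nY] by simp
  have "X \<bullet> Y \<noteq> -1"
  proof
    assume e: "X \<bullet> Y = -1"
    have "(norm (X + Y))\<^sup>2 = (X + Y) \<bullet> (X + Y)" by (simp add: dot_square_norm)
    also have "\<dots> = X \<bullet> X + 2 * (X \<bullet> Y) + Y \<bullet> Y"
      by (simp add: inner_add_left inner_add_right inner_commute[of Y X])
    also have "\<dots> = 0" using e nX nY by (simp add: dot_square_norm)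
    finally have "Y = -X" by (simp add: add.commute add_eq_0_iff)
    moreover have "0 < ctr \<bullet> X" "0 < ctr \<bullet> Y" using polar_pos assms by auto
    ultimately show False by simp
  qed
  then show ?thesis using le by simp
qed

lemma E1: assumes X: "X \<in> spolar C" and Y: "Y \<in> spolar C" shows "- cos \<tau> \<le> X \<bullet> Y"
proof -
  have "continuous_on (spolar C \<times> spolar C) (\<lambda>z. fst z \<bullet> snd z)" by (intro continuous_intros)
  moreover have "compact (spolar C \<times> spolar C)" using polar_compact by (simp add: compact_Times)
  moreover have "spolar C \<times> spolar C \<noteq> {}" using X by auto
  ultimately obtain z where z: "z \<in> spolar C \<times> spolar C" "\<forall>y\<in>spolar C \<times> spolar C. fst z \<bullet> snd z \<le> fst y \<bullet> snd y"
    using continuous_attains_inf[of "spolar C \<times> spolar C" "\<lambda>z. fst z \<bullet> snd z"] by blast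
  obtain X0 Y0 where XY0: "z = (X0, Y0)" "X0 \<in> spolar C" "Y0 \<in> spolar C" using z by auto
  define e where "e = X0 \<bullet> Y0"
  have emin: "\<forall>A\<in>spolar C. \<forall>B\<in>spolar C. e \<le> A \<bullet> B"
  proof (intro ballI)
    fix A B assume "A \<in> spolar C" "B \<in> spolar C"
    then have "(A, B) \<in> spolar C \<times> spolar C" by simp
    then have "fst z \<bullet> snd z \<le> fst (A, B) \<bullet> snd (A, B)" using z(2) by blast
    then show "e \<le> A \<bullet> B" using XY0(1) by (simp add: e_def)
  qed
  have "- cos \<tau> \<le> e"
  proof (rule ccontr)
    assume "\<not> - cos \<tau> \<le> e"
    then have elt: "e < - cos \<tau>" by simp
    have nX0: "norm X0 = 1" and nY0: "norm Y0 = 1" using XY0 by (auto simp: spolar_iff)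
    have em1: "-1 < e" using polar_nonantipodal XY0 by (simp add: e_def)
    have e1: "e < 1" using elt c_gtm1 by simp
    define s' where "s' = sqrt (1 - e\<^sup>2)"
    have e2: "e\<^sup>2 < 1" using em1 e1 by (simp add: abs_square_less_1)
    have s'pos: "0 < s'" using e2 by (simp add: s'_def)
    have cs': "e\<^sup>2 + s'\<^sup>2 = 1" using e2 by (simp add: s'_def)
    define P where "P = (Y0 - e *\<^sub>R X0) /\<^sub>R s'"
    note pu = perp_unit[OF nX0 nY0 e_def[symmetric] cs' s'pos, folded P_def]
    have "P \<in> spolar (spolar C)"
      unfolding spolar_iff
    proof (intro conjI ballI)
      show "norm P = 1" by (rule pu(1))
      fix Z assume Z: "Z \<in> spolar C"
      have "0 \<le> Z \<bullet> (Y0 - e *\<^sub>R X0)"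
        by (rule far_pair[OF polar_sc XY0(2) XY0(3) emin e_def[symmetric] Z])
      then show "0 \<le> Z \<bullet> P" using s'pos by (simp add: P_def)
    qed
    then have PC: "P \<in> C" using bipolar by simp
    have PX0: "P \<bullet> X0 = 0" using pu(2) by (simp add: inner_commute)
    have QC: "cos \<tau> *\<^sub>R P + sin \<tau> *\<^sub>R X0 \<in> C" by (rule CL[OF PC XY0(2) PX0])
    have "0 \<le> (cos \<tau> *\<^sub>R P + sin \<tau> *\<^sub>R X0) \<bullet> Y0" using XY0(3) QC by (auto simp: spolar_iff)
    also have "\<dots> = cos \<tau> * s' + sin \<tau> * e"
      using pu(3) by (simp add: inner_add_left e_def inner_commute[of P Y0])
    finally have ge0: "0 \<le> cos \<tau> * s' + sin \<tau> * e" .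
    have sn: "(sin \<tau>)\<^sup>2 = 1 - (cos \<tau>)\<^sup>2" by (rule sin_squared_eq)
    have s'2: "s'\<^sup>2 = 1 - e\<^sup>2" using cs' by simp
    have "cos \<tau> * s' + sin \<tau> * e < 0" by (rule trig_ineq[OF s_pos s'pos sn s'2 elt])
    then show False using ge0 by simp
  qed
  moreover have "e \<le> X \<bullet> Y" using emin X Y by blast
  ultimately show ?thesis by simp
qed

lemma E2: assumes X: "X \<in> sboundary (spolar C)" shows "\<exists>Y\<in>spolar C. X \<bullet> Y = - cos \<tau>"
proof -
  have XC: "X \<in> spolar C" using polar_frontier(1)[OF X] .
  obtain P where P: "P \<in> C" "P \<bullet> X = 0" using polar_frontier(2)[OF X] by blast
  have nX: "norm X = 1" using XC by (simp add: spolar_iff)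
  have nP: "norm P = 1" using nC P by simp
  define Q where "Q = cos \<tau> *\<^sub>R P + sin \<tau> *\<^sub>R X"
  have QC: "Q \<in> C" unfolding Q_def by (rule CL[OF P(1) XC P(2)])
  have PP: "P \<bullet> P = 1" using nP by (simp add: dot_square_norm)
  have QP: "Q \<bullet> P = cos \<tau>" using P(2) PP by (simp add: Q_def inner_add_left inner_commute[of X P])
  define Y where "Y = (P - cos \<tau> *\<^sub>R Q) /\<^sub>R sin \<tau>"
  note pu = perp_unit[OF nC[OF QC] nP QP cs2 s_pos, folded Y_def]
  have YC: "Y \<in> spolar C"
    unfolding spolar_iff
  proof (intro conjI ballI)
    show "norm Y = 1" by (rule pu(1))
    fix Z assume Z: "Z \<in> C"
    have "0 \<le> Z \<bullet> (P - cos \<tau> *\<^sub>R Q)" by (rule far_pair[OF sc QC P(1) D1' QP Z])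
    then show "0 \<le> Z \<bullet> Y" using s_pos by (simp add: Y_def)
  qed
  have XQ: "X \<bullet> Q = sin \<tau>" using P(2) nX by (simp add: Q_def inner_add_right inner_commute[of P X] dot_square_norm)
  have "X \<bullet> Y = (X \<bullet> P - cos \<tau> * (X \<bullet> Q)) / sin \<tau>" by (simp add: Y_def inner_diff_right divide_inverse_commute)
  also have "\<dots> = - cos \<tau>" using XQ P(2) s_pos by (simp add: inner_commute[of X P])
  finally show ?thesis using YC by blast
qed

lemma pair_polar: "\<exists>X\<in>spolar C. \<exists>Y\<in>spolar C. X \<bullet> Y = - cos \<tau>"
proof -
  obtain P Q where PQ: "P \<in> C" "Q \<in> C" "P \<bullet> Q = cos \<tau>" using pair_exists by blast
  have QP: "Q \<bullet> P = cos \<tau>" using PQ by (simp add: inner_commute)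
  define G1 where "G1 = (Q - cos \<tau> *\<^sub>R P) /\<^sub>R sin \<tau>"
  define G2 where "G2 = (P - cos \<tau> *\<^sub>R Q) /\<^sub>R sin \<tau>"
  note pu1 = perp_unit[OF nC[OF PQ(1)] nC[OF PQ(2)] PQ(3) cs2 s_pos, folded G1_def]
  note pu2 = perp_unit[OF nC[OF PQ(2)] nC[OF PQ(1)] QP cs2 s_pos, folded G2_def]
  have G1C: "G1 \<in> spolar C"
    unfolding spolar_iff
  proof (intro conjI ballI)
    show "norm G1 = 1" by (rule pu1(1))
    fix Z assume Z: "Z \<in> C"
    have "0 \<le> Z \<bullet> (Q - cos \<tau> *\<^sub>R P)" by (rule far_pair[OF sc PQ(1) PQ(2) D1' PQ(3) Z])
    then show "0 \<le> Z \<bullet> G1" using s_pos by (simp add: G1_def)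
  qed
  have G2C: "G2 \<in> spolar C"
    unfolding spolar_iff
  proof (intro conjI ballI)
    show "norm G2 = 1" by (rule pu2(1))
    fix Z assume Z: "Z \<in> C"
    have "0 \<le> Z \<bullet> (P - cos \<tau> *\<^sub>R Q)" by (rule far_pair[OF sc PQ(2) PQ(1) D1' QP Z])
    then show "0 \<le> Z \<bullet> G2" using s_pos by (simp add: G2_def)
  qed
  have "G1 \<bullet> G2 = (G1 \<bullet> P - cos \<tau> * (G1 \<bullet> Q)) / sin \<tau>"
    by (simp add: G2_def inner_diff_right divide_inverse_commute)
  also have "G1 \<bullet> P = 0" using pu1(2) by (simp add: inner_commute)
  also have "G1 \<bullet> Q = sin \<tau>" using pu1(3) by (simp add: inner_commute)
  finally have "G1 \<bullet> G2 = - cos \<tau>" using s_pos by simp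
  then show ?thesis using G1C G2C by blast
qed

lemma arccos_mc: "arccos (- cos \<tau>) = pi - \<tau>"
  using tpos tlt by (simp add: arccos_minus arccos_cos)

lemma forward: "constant_diameter (spolar C) (pi - \<tau>)"
  unfolding constant_diameter_def
proof (intro conjI ballI)
  have "sdiameter (spolar C) = Sup {arccos (X \<bullet> Y) | X Y. X \<in> spolar C \<and> Y \<in> spolar C}"
    by (simp add: sdiameter_def sdist_def)
  also have "\<dots> = pi - \<tau>"
  proof (rule cSup_eq_maximum)
    obtain X Y where "X \<in> spolar C" "Y \<in> spolar C" "X \<bullet> Y = - cos \<tau>" using pair_polar by blast
    then show "pi - \<tau> \<in> {arccos (X \<bullet> Y) | X Y. X \<in> spolar C \<and> Y \<in> spolar C}"
      using arccos_mc by force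
    fix x assume "x \<in> {arccos (X \<bullet> Y) | X Y. X \<in> spolar C \<and> Y \<in> spolar C}"
    then obtain X Y where x: "x = arccos (X \<bullet> Y)" "X \<in> spolar C" "Y \<in> spolar C" by blast
    have "- cos \<tau> \<le> X \<bullet> Y" using E1 x by blast
    moreover have "X \<bullet> Y \<le> 1"
    proof -
      have "norm X = 1" "norm Y = 1" using x by (auto simp: spolar_iff)
      then show ?thesis using inner_bound1(2) by blast
    qed
    moreover have "-1 \<le> - cos \<tau>" using c_lt1 by simp
    ultimately have "arccos (X \<bullet> Y) \<le> arccos (- cos \<tau>)" by (intro arccos_le_arccos)
    then show "x \<le> pi - \<tau>" using x arccos_mc by simp
  qed
  finally show "sdiameter (spolar C) = pi - \<tau>" .
next
  fix X assume "X \<in> sboundary (spolar C)"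
  then obtain Y where "Y \<in> spolar C" "X \<bullet> Y = - cos \<tau>" using E2 by blast
  then show "\<exists>Q\<in>spolar C. sdist X Q = pi - \<tau>" using arccos_mc by (intro bexI[of _ Y]) (simp_all add: sdist_def)
qed

end

theorem corollary2p4:
  fixes C :: "'a::euclidean_space set" and \<tau> :: real
  assumes "spherical_convex_body C" and "0 < \<tau>" and "\<tau> < pi"
  shows "constant_diameter C \<tau> \<longleftrightarrow> constant_diameter (spolar C) (pi - \<tau>)"
proof
  assume "constant_diameter C \<tau>"
  then interpret cdb C \<tau> using assms by unfold_locales auto
  show "constant_diameter (spolar C) (pi - \<tau>)" by (rule forward)
next
  assume h: "constant_diameter (spolar C) (pi - \<tau>)"
  interpret sbody C using assms(1) by unfold_locales
  have pb: "spherical_convex_body (spolar C)" by (rule polar_body)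
  interpret P: cdb "spolar C" "pi - \<tau>" using pb h assms by unfold_locales auto
  have "constant_diameter (spolar (spolar C)) (pi - (pi - \<tau>))" by (rule P.forward)
  then show "constant_diameter C \<tau>" using bipolar by simp
qed


end
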